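(* Let $X,Y$ be normed spaces, $U\subseteq X$ open nonempty, $\mathcal{W}\subseteq\overline{\mathbb{R}}^U$, $k\in\mathbb{N}$ and $\gamma\in FC^1(U,Y)$. Then $\gamma\in C^{k+1}_{\mathcal{W}}(U,Y)$ if and only if $(D\gamma,\gamma)\in C^k_{\mathcal{W}}(U,L(X,Y))\times C^0_{\mathcal{W}}(U,Y)$. Moreover, the map $C^{k+1}_{\mathcal{W}}(U,Y)\to C^k_{\mathcal{W}}(U,L(X,Y))\times C^0_{\mathcal{W}}(U,Y)$, $\gamma\mapsto(D\gamma,\gamma)$, is a topological embedding; in particular $D:C^{k+1}_{\mathcal{W}}(U,Y)\to C^k_{\mathcal{W}}(U,L(X,Y))$ is continuous.
   Context: $FC^m(U,Y)$: $m$ times continuously Fréchet differentiable maps, $D\gamma:U\to L(X,Y)$ the Fréchet derivative, $L(X,Y)$ with the operator norm. $C^m_{\mathcal W}(U,E)$ (normed $E$): the $\gamma\in FC^m(U,E)$ with $\sup_{x\in U}|f(x)|\,\|D^{(j)}\gamma(x)\|_{op}<\infty$ for all $f\in\mathcal W$, $j\in\mathbb N$, $j\le m$ ($\infty\cdot0=0$), with the locally convex topology of these seminorms. *)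

theory Defs
  imports "HOL-Analysis.Analysis"
begin

(* j-th Frechet derivative of gamma at x, represented as a j-multilinear map
   acting on a direction sequence h (only h 0, ..., h (j-1) are used):
   D^(j+1) gamma(x)(h0,h1,...,hj) = D( y |-> D^j gamma(y)(h1,...,hj) )(x)(h0). *)
fun hderiv :: "nat \<Rightarrow> ('a::real_normed_vector \<Rightarrow> 'b::real_normed_vector)
                 \<Rightarrow> 'a \<Rightarrow> (nat \<Rightarrow> 'a) \<Rightarrow> 'b" where
  "hderiv 0 \<gamma> x h = \<gamma> x"
| "hderiv (Suc j) \<gamma> x h =
     frechet_derivative (\<lambda>y. hderiv j \<gamma> y (\<lambda>i. h (Suc i))) (at x) (h 0)"

definition shift_dir :: "'a \<Rightarrow> (nat \<Rightarrow> 'a) \<Rightarrow> nat \<Rightarrow> 'a" where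
  "shift_dir v h = (\<lambda>i. case i of 0 \<Rightarrow> v | Suc i' \<Rightarrow> h i')"

definition unit_dirs :: "nat \<Rightarrow> (nat \<Rightarrow> 'a::real_normed_vector) set" where
  "unit_dirs j = {h. \<forall>i<j. norm (h i) \<le> 1}"

definition mnorm :: "nat \<Rightarrow> ((nat \<Rightarrow> 'a::real_normed_vector) \<Rightarrow> 'b::real_normed_vector) \<Rightarrow> real" where
  "mnorm j g = (SUP h\<in>unit_dirs j. norm (g h))"

definition multilin_bounded :: "nat \<Rightarrow> ((nat \<Rightarrow> 'a::real_normed_vector) \<Rightarrow> 'b::real_normed_vector) \<Rightarrow> bool" where
  "multilin_bounded j g \<longleftrightarrow>
     (\<forall>i<j. \<forall>h. linear (\<lambda>v. g (h(i := v)))) \<and> (\<exists>B. \<forall>h\<in>unit_dirs j. norm (g h) \<le> B)"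

(* FC^m(U,E): m times continuously Frechet differentiable on U,
   derivatives taken with respect to the operator norm *)
definition FC :: "nat \<Rightarrow> 'a set \<Rightarrow> ('a::real_normed_vector \<Rightarrow> 'b::real_normed_vector) \<Rightarrow> bool" where
  "FC m U \<gamma> \<longleftrightarrow>
     (\<forall>j\<le>m. \<forall>x\<in>U. multilin_bounded j (hderiv j \<gamma> x)) \<and>
     (\<forall>j<m. \<forall>x\<in>U. ((\<lambda>v. mnorm j (\<lambda>h. hderiv j \<gamma> (x + v) h - hderiv j \<gamma> x h
                                          - hderiv (Suc j) \<gamma> x (shift_dir v h)) / norm v)
                     \<longlongrightarrow> 0) (at 0)) \<and>
     (\<forall>j\<le>m. \<forall>x\<in>U. ((\<lambda>y. mnorm j (\<lambda>h. hderiv j \<gamma> y h - hderiv j \<gamma> x h)) \<longlongrightarrow> 0) (at x within U))"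

(* the seminorm  sup_{x in U} |f x| * ||D^j(eta - gamma)(x)||_op  (with inf * 0 = 0 in ereal) *)
definition wsemi :: "'a set \<Rightarrow> ('a \<Rightarrow> ereal) \<Rightarrow> nat \<Rightarrow> ('a::real_normed_vector \<Rightarrow> 'b::real_normed_vector)
                      \<Rightarrow> ('a \<Rightarrow> 'b) \<Rightarrow> ereal" where
  "wsemi U f j \<eta> \<gamma> = (SUP x\<in>U. \<bar>f x\<bar> * ereal (mnorm j (\<lambda>h. hderiv j \<eta> x h - hderiv j \<gamma> x h)))"

definition CW :: "nat \<Rightarrow> 'a set \<Rightarrow> ('a \<Rightarrow> ereal) set \<Rightarrow> ('a::real_normed_vector \<Rightarrow> 'b::real_normed_vector) set" where
  "CW m U W = {\<gamma>. FC m U \<gamma> \<and> (\<forall>f\<in>W. \<forall>j\<le>m. (SUP x\<in>U. \<bar>f x\<bar> * ereal (mnorm j (hderiv j \<gamma> x))) < \<infinity>)}"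

definition CW_top :: "nat \<Rightarrow> 'a set \<Rightarrow> ('a \<Rightarrow> ereal) set \<Rightarrow> ('a::real_normed_vector \<Rightarrow> 'b::real_normed_vector) topology" where
  "CW_top m U W = topology_generated_by
     (insert (CW m U W)
        {{\<eta> \<in> CW m U W. wsemi U f j \<eta> \<gamma> < ereal \<epsilon>} | \<gamma> f j \<epsilon>.
            \<gamma> \<in> CW m U W \<and> f \<in> W \<and> j \<le> m \<and> \<epsilon> > 0})"

definition Dfun :: "('a::real_normed_vector \<Rightarrow> 'b::real_normed_vector) \<Rightarrow> 'a \<Rightarrow> ('a \<Rightarrow>\<^sub>L 'b)" where
  "Dfun \<gamma> x = Blinfun (frechet_derivative \<gamma> (at x))"

end

theory Submission
  imports Defs
begin

lemma lin_unit_bound: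
  fixes f :: "'a::real_normed_vector \<Rightarrow> 'b::real_normed_vector"
  assumes "linear f" "\<And>v. norm v \<le> 1 \<Longrightarrow> norm (f v) \<le> B"
  shows "norm (f v) \<le> B * norm v"
proof (cases "v = 0")
  case True then show ?thesis using linear_0[OF assms(1)] by simp
next
  case False
  have "f v = norm v *\<^sub>R f (v /\<^sub>R norm v)"
    using linear_scale[OF assms(1), of "norm v" "v /\<^sub>R norm v"] False by simp
  then have "norm (f v) = norm v * norm (f (v /\<^sub>R norm v))" by simp
  also have "\<dots> \<le> norm v * B" using assms(2)[of "v /\<^sub>R norm v"] False
    by (intro mult_left_mono) auto
  finally show ?thesis by (simp add: mult.commute)
qed

lemma lin_unit_bounded_linear:
  fixes f :: "'a::real_normed_vector \<Rightarrow> 'b::real_normed_vector"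
  assumes "linear f" "\<And>v. norm v \<le> 1 \<Longrightarrow> norm (f v) \<le> B"
  shows "bounded_linear f"
proof (rule bounded_linear_intro[where K=B])
  show "\<And>x y. f (x + y) = f x + f y" using linear_add[OF assms(1)] by simp
  show "\<And>r x. f (r *\<^sub>R x) = r *\<^sub>R f x" using linear_scale[OF assms(1)] by simp
  show "\<And>x. norm (f x) \<le> norm x * B" using lin_unit_bound[OF assms] by (simp add: mult.commute)
qed

definition sc :: "(nat \<Rightarrow> 'a::real_normed_vector) \<Rightarrow> nat \<Rightarrow> real" where
  "sc h i = max 1 (norm (h i))"

definition nrm :: "nat \<Rightarrow> (nat \<Rightarrow> 'a::real_normed_vector) \<Rightarrow> nat \<Rightarrow> 'a" where
  "nrm n h = (\<lambda>i. if i < n then h i /\<^sub>R sc h i else h i)"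

lemma sc_pos: "sc h i > 0" "sc h i \<ge> 1" by (auto simp: sc_def)

lemma nrm_unit: "nrm n h \<in> unit_dirs n"
proof -
  have "norm (h i /\<^sub>R sc h i) \<le> 1" for i
  proof -
    have "norm (h i) \<le> sc h i" by (simp add: sc_def)
    then show ?thesis using sc_pos[of h i] by (simp add: field_simps)
  qed
  then show ?thesis by (auto simp: unit_dirs_def nrm_def)
qed

lemma multilin_scale:
  fixes g :: "(nat \<Rightarrow> 'a::real_normed_vector) \<Rightarrow> 'b::real_normed_vector"
  assumes "\<And>i h. i < n \<Longrightarrow> linear (\<lambda>v. g (h(i:=v)))"
  shows "g h = (\<Prod>i<n. sc h i) *\<^sub>R g (nrm n h)"
proof -
  have "m \<le> n \<Longrightarrow> g h = (\<Prod>i<m. sc h i) *\<^sub>R g (\<lambda>i. if i < m then h i /\<^sub>R sc h i else h i)" for m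
  proof (induction m)
    case 0 then show ?case by simp
  next
    case (Suc m)
    define hm where "hm = (\<lambda>i. if i < m then h i /\<^sub>R sc h i else h i)"
    have e1: "hm = hm(m := sc h m *\<^sub>R (h m /\<^sub>R sc h m))"
      using sc_pos[of h m] by (auto simp: hm_def)
    have e2: "(\<lambda>i. if i < Suc m then h i /\<^sub>R sc h i else h i) = hm(m := h m /\<^sub>R sc h m)"
      by (auto simp: hm_def)
    have "g hm = sc h m *\<^sub>R g (hm(m := h m /\<^sub>R sc h m))"
      using linear_scale[OF assms[of m hm], of "sc h m" "h m /\<^sub>R sc h m"] Suc.prems e1 by simp
    then show ?case using Suc e2 by (simp add: hm_def)
  qed
  then show ?thesis by (simp add: nrm_def)
qed

lemma multilin_bound:
  fixes g :: "(nat \<Rightarrow> 'a::real_normed_vector) \<Rightarrow> 'b::real_normed_vector"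
  assumes "multilin_bounded n g"
  shows "\<exists>B\<ge>0. \<forall>h. norm (g h) \<le> (\<Prod>i<n. sc h i) * B"
proof -
  obtain B where B: "\<forall>h\<in>unit_dirs n. norm (g h) \<le> B"
    using assms by (auto simp: multilin_bounded_def)
  have "(\<lambda>i. 0) \<in> unit_dirs n" by (simp add: unit_dirs_def)
  then have B0: "B \<ge> 0" using B by (meson norm_ge_zero order_trans)
  have "norm (g h) \<le> (\<Prod>i<n. sc h i) * B" for h
  proof -
    have "g h = (\<Prod>i<n. sc h i) *\<^sub>R g (nrm n h)"
      by (rule multilin_scale) (use assms in \<open>unfold multilin_bounded_def, blast\<close>)
    moreover have "(\<Prod>i<n. sc h i) \<ge> 0" by (rule prod_nonneg) (use sc_pos in \<open>auto intro: less_imp_le\<close>)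
    ultimately show ?thesis using B nrm_unit[of n h]
      by (auto intro: mult_left_mono)
  qed
  then show ?thesis using B0 by blast
qed

lemma multilin_bound_R:
  fixes g :: "(nat \<Rightarrow> 'a::real_normed_vector) \<Rightarrow> 'b::real_normed_vector"
  assumes "multilin_bounded n g" "R \<ge> 1"
  shows "\<exists>C. \<forall>h. (\<forall>i<n. norm (h i) \<le> R) \<longrightarrow> norm (g h) \<le> C"
proof -
  obtain B where B: "B \<ge> 0" "\<forall>h. norm (g h) \<le> (\<Prod>i<n. sc h i) * B"
    using multilin_bound[OF assms(1)] by blast
  have "norm (g h) \<le> R ^ n * B" if "\<forall>i<n. norm (h i) \<le> R" for h
  proof -
    have "(\<Prod>i<n. sc h i) \<le> R ^ n"
      by (rule prod_le_power) (use that assms(2) sc_pos in \<open>auto simp: sc_def less_imp_le\<close>)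
    then show ?thesis using B by (meson mult_right_mono order_trans)
  qed
  then show ?thesis by blast
qed

lemma hderiv_cong: "(\<And>i. i < j \<Longrightarrow> h i = h' i) \<Longrightarrow> hderiv j \<gamma> x h = hderiv j \<gamma> x h'"
proof (induction j arbitrary: x h h')
  case 0 then show ?case by simp
next
  case (Suc j)
  have "(\<lambda>y. hderiv j \<gamma> y (\<lambda>i. h (Suc i))) = (\<lambda>y. hderiv j \<gamma> y (\<lambda>i. h' (Suc i)))"
    using Suc.IH[of "\<lambda>i. h (Suc i)" "\<lambda>i. h' (Suc i)"] Suc.prems by auto
  then show ?case using Suc.prems[of 0] by simp
qed

lemma unit_dirs_0: "(\<lambda>i. 0) \<in> unit_dirs j" by (simp add: unit_dirs_def)
lemma unit_dirs_Suc: "h \<in> unit_dirs (Suc j) \<Longrightarrow> h \<in> unit_dirs j" by (simp add: unit_dirs_def)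
lemma unit_dirs_upd: "h \<in> unit_dirs j \<Longrightarrow> norm w \<le> 1 \<Longrightarrow> h(j:=w) \<in> unit_dirs (Suc j)"
  by (simp add: unit_dirs_def less_Suc_eq)

lemma mnorm_upper:
  assumes "\<And>h. h \<in> unit_dirs j \<Longrightarrow> norm (g h) \<le> B" "h \<in> unit_dirs j"
  shows "norm (g h) \<le> mnorm j g"
proof -
  have "bdd_above ((\<lambda>h. norm (g h)) ` unit_dirs j)"
    by (rule bdd_aboveI2[where M=B]) (rule assms(1))
  then show ?thesis unfolding mnorm_def by (rule cSUP_upper[OF assms(2)])
qed

lemma mnorm_least:
  assumes "\<And>h. h \<in> unit_dirs j \<Longrightarrow> norm (g h) \<le> B"
  shows "mnorm j g \<le> B"
proof -
  have "unit_dirs j \<noteq> {}" using unit_dirs_0 by blast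
  then show ?thesis unfolding mnorm_def by (rule cSUP_least) (rule assms)
qed

lemma mnorm_nonneg:
  assumes "\<And>h. h \<in> unit_dirs j \<Longrightarrow> norm (g h) \<le> B"
  shows "0 \<le> mnorm j g"
proof -
  have "norm (g (\<lambda>i. 0)) \<le> mnorm j g" by (rule mnorm_upper[OF assms unit_dirs_0])
  then show ?thesis by (meson norm_ge_zero order_trans)
qed

lemma mnorm_blinfun_eq:
  fixes \<Phi> :: "(nat \<Rightarrow> 'a::real_normed_vector) \<Rightarrow> ('a \<Rightarrow>\<^sub>L 'b::real_normed_vector)"
    and \<psi> :: "(nat \<Rightarrow> 'a) \<Rightarrow> 'b"
  assumes \<Phi>\<psi>: "\<And>h w. h \<in> unit_dirs j \<Longrightarrow> blinfun_apply (\<Phi> h) w = \<psi> (h(j:=w))"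
    and B: "\<And>h. h \<in> unit_dirs (Suc j) \<Longrightarrow> norm (\<psi> h) \<le> B"
  shows "mnorm j \<Phi> = mnorm (Suc j) \<psi>"
    and "\<And>h. h \<in> unit_dirs j \<Longrightarrow> norm (\<Phi> h) \<le> mnorm (Suc j) \<psi>"
proof -
  define M where "M = mnorm (Suc j) \<psi>"
  have M0: "0 \<le> M" unfolding M_def by (rule mnorm_nonneg[OF B])
  have P: "norm (\<Phi> h) \<le> M" if h: "h \<in> unit_dirs j" for h
  proof (rule norm_blinfun_bound[OF M0])
    fix x
    show "norm (blinfun_apply (\<Phi> h) x) \<le> M * norm x"
    proof (rule lin_unit_bound)
      show "linear (blinfun_apply (\<Phi> h))"
        using blinfun.bounded_linear_right bounded_linear.linear by blast
      fix v :: 'a assume "norm v \<le> 1"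
      then show "norm (blinfun_apply (\<Phi> h) v) \<le> M"
        using \<Phi>\<psi>[OF h] mnorm_upper[OF B unit_dirs_upd[OF h]] by (simp add: M_def)
    qed
  qed
  then show "\<And>h. h \<in> unit_dirs j \<Longrightarrow> norm (\<Phi> h) \<le> mnorm (Suc j) \<psi>" by (simp add: M_def)
  have "mnorm j \<Phi> \<le> M" by (rule mnorm_least[OF P])
  moreover have "M \<le> mnorm j \<Phi>" unfolding M_def
  proof (rule mnorm_least)
    fix h :: "nat \<Rightarrow> 'a" assume h: "h \<in> unit_dirs (Suc j)"
    then have hj: "h \<in> unit_dirs j" "norm (h j) \<le> 1" by (auto simp: unit_dirs_def)
    have "\<psi> h = blinfun_apply (\<Phi> h) (h j)" using \<Phi>\<psi>[OF hj(1), of "h j"] by simp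
    then have "norm (\<psi> h) \<le> norm (\<Phi> h) * norm (h j)" by (simp add: norm_blinfun)
    also have "\<dots> \<le> norm (\<Phi> h)" using hj(2) by (simp add: mult_left_le)
    also have "\<dots> \<le> mnorm j \<Phi>" by (rule mnorm_upper[OF P hj(1)])
    finally show "norm (\<psi> h) \<le> mnorm j \<Phi>" .
  qed
  ultimately show "mnorm j \<Phi> = mnorm (Suc j) \<psi>" by (simp add: M_def)
qed

definition DIat :: "nat \<Rightarrow> ('a::real_normed_vector \<Rightarrow> 'b::real_normed_vector) \<Rightarrow> 'a \<Rightarrow> bool" where
  "DIat j \<gamma> x \<longleftrightarrow> (\<forall>h v. blinfun_apply (hderiv j (Dfun \<gamma>) x h) v = hderiv (Suc j) \<gamma> x (h(j:=v)))"

lemma DIat0: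
  fixes \<gamma> :: "'a::real_normed_vector \<Rightarrow> 'b::real_normed_vector"
  assumes "multilin_bounded 1 (hderiv 1 \<gamma> x)"
  shows "DIat 0 \<gamma> x"
proof -
  let ?f = "frechet_derivative \<gamma> (at x)"
  have lin: "linear ?f" using assms unfolding multilin_bounded_def by auto
  obtain B where B: "\<forall>h\<in>unit_dirs 1. norm (hderiv 1 \<gamma> x h) \<le> B"
    using assms unfolding multilin_bounded_def by auto
  have "norm (?f v) \<le> B" if "norm v \<le> 1" for v
    using B[rule_format, of "\<lambda>i. v"] that by (auto simp: unit_dirs_def)
  then have bl: "bounded_linear ?f" by (rule lin_unit_bounded_linear[OF lin])
  show ?thesis unfolding DIat_def Dfun_def
    by (simp add: bounded_linear_Blinfun_apply[OF bl])
qed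

lemma shift_dir_Suc: "(\<lambda>i. shift_dir v h (Suc i)) = h" by (simp add: shift_dir_def)
lemma shift_dir_0: "shift_dir v h 0 = v" by (simp add: shift_dir_def)
lemma shift_dir_upd: "shift_dir v (h(j:=w)) = (shift_dir v h)(Suc j := w)"
  by (auto simp: shift_dir_def split: nat.split)
lemma shift_dir_upd0: "shift_dir v h = (shift_dir u h)(0 := v)"
  by (auto simp: shift_dir_def split: nat.split)
lemma shift_dir_unit: "h \<in> unit_dirs j \<Longrightarrow> norm v \<le> 1 \<Longrightarrow> shift_dir v h \<in> unit_dirs (Suc j)"
  by (auto simp: unit_dirs_def shift_dir_def less_Suc_eq_0_disj)

lemma DIat_step:
  fixes \<gamma> :: "'a::real_normed_vector \<Rightarrow> 'b::real_normed_vector"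
  assumes U: "open U" "x \<in> U" and DI: "\<And>y. y \<in> U \<Longrightarrow> DIat j \<gamma> y"
    and diff: "\<And>h. (\<lambda>y. hderiv j (Dfun \<gamma>) y h) differentiable (at x)"
  shows "DIat (Suc j) \<gamma> x"
  unfolding DIat_def
proof (intro allI)
  fix h v
  define G where "G = (\<lambda>y. hderiv j (Dfun \<gamma>) y (\<lambda>i. h (Suc i)))"
  define G' where "G' = frechet_derivative G (at x)"
  have dG: "(G has_derivative G') (at x)"
    unfolding G'_def using diff[of "\<lambda>i. h (Suc i)"] frechet_derivative_works G_def by blast
  have d1: "((\<lambda>y. blinfun_apply (G y) v) has_derivative (\<lambda>w. blinfun_apply (G' w) v)) (at x)"
    using bounded_linear.has_derivative[OF blinfun.bounded_linear_left dG] .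
  define F where "F = (\<lambda>y. hderiv (Suc j) \<gamma> y (\<lambda>i. (h(Suc j := v)) (Suc i)))"
  have eqf: "(\<lambda>i. h (Suc i))(j := v) = (\<lambda>i. (h(Suc j := v)) (Suc i))" by auto
  have "blinfun_apply (G y) v = F y" if "y \<in> U" for y
    using DI[OF that] unfolding DIat_def G_def F_def by (simp add: eqf)
  then have dF: "(F has_derivative (\<lambda>w. blinfun_apply (G' w) v)) (at x)"
    using has_derivative_transform_within_open[OF d1 U] by blast
  have "hderiv (Suc (Suc j)) \<gamma> x (h(Suc j := v)) = frechet_derivative F (at x) (h 0)"
    by (simp add: F_def)
  also have "\<dots> = blinfun_apply (G' (h 0)) v" using frechet_derivative_at[OF dF] by metis
  also have "\<dots> = blinfun_apply (hderiv (Suc j) (Dfun \<gamma>) x h) v" by (simp add: G'_def G_def)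
  finally show "blinfun_apply (hderiv (Suc j) (Dfun \<gamma>) x h) v = hderiv (Suc (Suc j)) \<gamma> x (h(Suc j := v))" by simp
qed

declare hderiv.simps(2)[simp del]

lemma MLEQ:
  fixes \<gamma> :: "'a::real_normed_vector \<Rightarrow> 'b::real_normed_vector"
  assumes DI: "DIat j \<gamma> y"
  shows "multilin_bounded (Suc j) (hderiv (Suc j) \<gamma> y) \<longleftrightarrow> multilin_bounded j (hderiv j (Dfun \<gamma>) y)"
proof -
  define \<Phi> where "\<Phi> = hderiv j (Dfun \<gamma>) y"
  define \<psi> where "\<psi> = hderiv (Suc j) \<gamma> y"
  have E: "blinfun_apply (\<Phi> h) w = \<psi> (h(j:=w))" for h w
    using DI unfolding DIat_def \<Phi>_def \<psi>_def by blast
  show ?thesis unfolding \<Phi>_def[symmetric] \<psi>_def[symmetric]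
  proof
    assume A: "multilin_bounded (Suc j) \<psi>"
    then have lin: "\<And>i h. i < Suc j \<Longrightarrow> linear (\<lambda>v. \<psi> (h(i:=v)))"
      and "\<exists>B. \<forall>h\<in>unit_dirs (Suc j). norm (\<psi> h) \<le> B" unfolding multilin_bounded_def by auto
    then obtain B where B: "\<And>h. h \<in> unit_dirs (Suc j) \<Longrightarrow> norm (\<psi> h) \<le> B" by blast
    have L: "linear (\<lambda>v. \<Phi> (h(i:=v)))" if i: "i < j" for i h
    proof -
      have e: "blinfun_apply (\<Phi> (h(i:=c))) w = \<psi> ((h(j:=w))(i:=c))" for c w
        using E[of "h(i:=c)" w] i by (simp add: fun_upd_twist)
      have li: "linear (\<lambda>v. \<psi> ((h(j:=w))(i:=v)))" for w using lin i by simp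
      show ?thesis
      proof (rule linearI)
        fix a b
        show "\<Phi> (h(i := a + b)) = \<Phi> (h(i := a)) + \<Phi> (h(i := b))"
          by (rule blinfun_eqI) (simp add: e blinfun.add_left linear_add[OF li])
      next
        fix r a
        show "\<Phi> (h(i := r *\<^sub>R a)) = r *\<^sub>R \<Phi> (h(i := a))"
          by (rule blinfun_eqI) (simp add: e linear_scale[OF li] blinfun.scaleR_left)
      qed
    qed
    have "norm (\<Phi> h) \<le> mnorm (Suc j) \<psi>" if "h \<in> unit_dirs j" for h
      by (rule mnorm_blinfun_eq(2)[OF _ B that]) (rule E)
    then show "multilin_bounded j \<Phi>" using L unfolding multilin_bounded_def by blast
  next
    assume A: "multilin_bounded j \<Phi>"
    then have lin: "\<And>i h. i < j \<Longrightarrow> linear (\<lambda>v. \<Phi> (h(i:=v)))"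
      and "\<exists>B. \<forall>h\<in>unit_dirs j. norm (\<Phi> h) \<le> B" unfolding multilin_bounded_def by auto
    then obtain B where B: "\<And>h. h \<in> unit_dirs j \<Longrightarrow> norm (\<Phi> h) \<le> B" by blast
    have L: "linear (\<lambda>v. \<psi> (h(i:=v)))" if i: "i < Suc j" for i h
    proof (cases "i = j")
      case True
      have "(\<lambda>v. \<psi> (h(i:=v))) = blinfun_apply (\<Phi> h)" using E True by auto
      then show ?thesis using blinfun.bounded_linear_right bounded_linear.linear by metis
    next
      case False
      then have ij: "i < j" using i by simp
      have "\<psi> (h(i:=v)) = blinfun_apply (\<Phi> (h(i:=v))) (h j)" for v
      proof -
        have "(h(i:=v))(j := h j) = h(i:=v)" using False by (intro ext) auto
        then show ?thesis using E[of "h(i:=v)" "h j"] by simp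
      qed
      then have "(\<lambda>v. \<psi> (h(i:=v))) = (\<lambda>F. blinfun_apply F (h j)) \<circ> (\<lambda>v. \<Phi> (h(i:=v)))" by auto
      moreover have "linear (\<lambda>F::'a \<Rightarrow>\<^sub>L 'b. blinfun_apply F (h j))"
        using blinfun.bounded_linear_left bounded_linear.linear by blast
      ultimately show ?thesis using linear_compose[OF lin[OF ij]] by metis
    qed
    have "norm (\<psi> h) \<le> B" if h: "h \<in> unit_dirs (Suc j)" for h
    proof -
      have hj: "h \<in> unit_dirs j" "norm (h j) \<le> 1" using h by (auto simp: unit_dirs_def)
      have "\<psi> h = blinfun_apply (\<Phi> h) (h j)" using E[of h "h j"] by simp
      then have "norm (\<psi> h) \<le> norm (\<Phi> h) * norm (h j)" by (simp add: norm_blinfun)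
      also have "\<dots> \<le> norm (\<Phi> h)" using hj(2) by (simp add: mult_left_le)
      also have "\<dots> \<le> B" by (rule B[OF hj(1)])
      finally show ?thesis .
    qed
    then show "multilin_bounded (Suc j) \<psi>" using L unfolding multilin_bounded_def by blast
  qed
qed

lemma diff_scale:
  fixes \<phi> :: "'a::real_normed_vector \<Rightarrow> 'c::real_normed_vector"
  assumes U: "open U" "x \<in> U"
    and lin: "\<And>y i h. y \<in> U \<Longrightarrow> i < j \<Longrightarrow> linear (\<lambda>v. hderiv j \<phi> y (h(i:=v)))"
    and du: "\<And>h. h \<in> unit_dirs j \<Longrightarrow> (\<lambda>y. hderiv j \<phi> y h) differentiable (at x)"
  shows "(\<lambda>y. hderiv j \<phi> y h) differentiable (at x)"
proof -
  define c where "c = (\<Prod>i<j. sc h i)"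
  obtain D where D: "((\<lambda>y. hderiv j \<phi> y (nrm j h)) has_derivative D) (at x)"
    using du[OF nrm_unit] unfolding differentiable_def by blast
  have D2: "((\<lambda>y. c *\<^sub>R hderiv j \<phi> y (nrm j h)) has_derivative (\<lambda>v. c *\<^sub>R D v)) (at x)"
    by (rule has_derivative_scaleR_right[OF D])
  have E: "c *\<^sub>R hderiv j \<phi> y (nrm j h) = hderiv j \<phi> y h" if "y \<in> U" for y
  proof -
    have "hderiv j \<phi> y h = (\<Prod>i<j. sc h i) *\<^sub>R hderiv j \<phi> y (nrm j h)"
      by (rule multilin_scale) (rule lin[OF that])
    then show ?thesis by (simp add: c_def)
  qed
  have "((\<lambda>y. hderiv j \<phi> y h) has_derivative (\<lambda>v. c *\<^sub>R D v)) (at x)"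
    by (rule has_derivative_transform_within_open[OF D2 U]) (rule E)
  then show ?thesis by (rule differentiableI)
qed

lemma rem_bdd:
  assumes "multilin_bounded n (hderiv n \<phi> y)" "multilin_bounded n (hderiv n \<phi> x)"
    "multilin_bounded (Suc n) (hderiv (Suc n) \<phi> x)"
  shows "\<exists>C. \<forall>h\<in>unit_dirs n. norm (hderiv n \<phi> y h - hderiv n \<phi> x h - hderiv (Suc n) \<phi> x (shift_dir v h)) \<le> C"
proof -
  obtain B1 where B1: "\<forall>h\<in>unit_dirs n. norm (hderiv n \<phi> y h) \<le> B1"
    using assms(1) unfolding multilin_bounded_def by blast
  obtain B2 where B2: "\<forall>h\<in>unit_dirs n. norm (hderiv n \<phi> x h) \<le> B2"
    using assms(2) unfolding multilin_bounded_def by blast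
  obtain C3 where C3: "\<forall>h. (\<forall>i<Suc n. norm (h i) \<le> max 1 (norm v)) \<longrightarrow> norm (hderiv (Suc n) \<phi> x h) \<le> C3"
    using multilin_bound_R[OF assms(3), of "max 1 (norm v)"] by auto
  have "norm (hderiv n \<phi> y h - hderiv n \<phi> x h - hderiv (Suc n) \<phi> x (shift_dir v h)) \<le> B1 + B2 + C3"
    if h: "h \<in> unit_dirs n" for h
  proof -
    have "\<forall>i<Suc n. norm (shift_dir v h i) \<le> max 1 (norm v)"
      using h by (auto simp: shift_dir_def unit_dirs_def split: nat.split)
    then have "norm (hderiv (Suc n) \<phi> x (shift_dir v h)) \<le> C3" using C3 by blast
    moreover have "norm (hderiv n \<phi> y h) \<le> B1" "norm (hderiv n \<phi> x h) \<le> B2" using B1 B2 h by auto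
    moreover have "norm (hderiv n \<phi> y h - hderiv n \<phi> x h - hderiv (Suc n) \<phi> x (shift_dir v h))
        \<le> norm (hderiv n \<phi> y h) + norm (hderiv n \<phi> x h) + norm (hderiv (Suc n) \<phi> x (shift_dir v h))"
    proof -
      have "norm (hderiv n \<phi> y h - hderiv n \<phi> x h - hderiv (Suc n) \<phi> x (shift_dir v h))
          \<le> norm (hderiv n \<phi> y h - hderiv n \<phi> x h) + norm (hderiv (Suc n) \<phi> x (shift_dir v h))"
        by (rule norm_triangle_ineq4)
      moreover have "norm (hderiv n \<phi> y h - hderiv n \<phi> x h) \<le> norm (hderiv n \<phi> y h) + norm (hderiv n \<phi> x h)"
        by (rule norm_triangle_ineq4)
      ultimately show ?thesis by linarith
    qed
    ultimately show ?thesis by linarith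
  qed
  then show ?thesis by blast
qed

lemma eventually_in_open:
  fixes x :: "'a::real_normed_vector"
  assumes "open U" "x \<in> U"
  shows "eventually (\<lambda>v. x + v \<in> U) (at 0)"
proof -
  have "((\<lambda>v. x + v) \<longlongrightarrow> x + 0) (at (0::'a))"
    by (intro tendsto_intros)
  then show ?thesis using topological_tendstoD[of "\<lambda>v. x + v" x "at 0" U] assms by simp
qed

lemma FC_deriv_diff:
  fixes \<phi> :: "'a::real_normed_vector \<Rightarrow> 'c::real_normed_vector"
  assumes U: "open U" "x \<in> U"
    and ml: "\<And>y. y \<in> U \<Longrightarrow> multilin_bounded j (hderiv j \<phi> y)"
    and ml2: "multilin_bounded (Suc j) (hderiv (Suc j) \<phi> x)"
    and lim: "((\<lambda>v. mnorm j (\<lambda>h. hderiv j \<phi> (x + v) h - hderiv j \<phi> x h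
                    - hderiv (Suc j) \<phi> x (shift_dir v h)) / norm v) \<longlongrightarrow> 0) (at 0)"
  shows "(\<lambda>y. hderiv j \<phi> y h) differentiable (at x)"
proof (rule diff_scale[OF U])
  show "\<And>y i h. y \<in> U \<Longrightarrow> i < j \<Longrightarrow> linear (\<lambda>v. hderiv j \<phi> y (h(i := v)))"
    using ml unfolding multilin_bounded_def by blast
  fix h :: "nat \<Rightarrow> 'a" assume h: "h \<in> unit_dirs j"
  define L where "L = (\<lambda>v. hderiv (Suc j) \<phi> x (shift_dir v h))"
  have linL: "linear L"
  proof -
    have "linear (\<lambda>v. hderiv (Suc j) \<phi> x ((shift_dir 0 h)(0 := v)))"
      using ml2 unfolding multilin_bounded_def by blast
    moreover have "(\<lambda>v. hderiv (Suc j) \<phi> x ((shift_dir 0 h)(0 := v))) = L"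
      unfolding L_def by (simp add: shift_dir_upd0[symmetric])
    ultimately show ?thesis by simp
  qed
  obtain B where B: "\<forall>hh\<in>unit_dirs (Suc j). norm (hderiv (Suc j) \<phi> x hh) \<le> B"
    using ml2 unfolding multilin_bounded_def by blast
  have blL: "bounded_linear L"
    by (rule lin_unit_bounded_linear[OF linL, of B]) (use B shift_dir_unit[OF h] in \<open>auto simp: L_def\<close>)
  define Q where "Q = (\<lambda>v. mnorm j (\<lambda>h. hderiv j \<phi> (x + v) h - hderiv j \<phi> x h
                    - hderiv (Suc j) \<phi> x (shift_dir v h)) / norm v)"
  have "((\<lambda>v. norm (hderiv j \<phi> (x + v) h - hderiv j \<phi> x h - L v) / norm v) \<longlongrightarrow> 0) (at 0)"
  proof (rule tendsto_sandwich[where f="\<lambda>v. 0" and h=Q])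
    show "\<forall>\<^sub>F v in at 0. 0 \<le> norm (hderiv j \<phi> (x + v) h - hderiv j \<phi> x h - L v) / norm v" by simp
    show "((\<lambda>v. 0) \<longlongrightarrow> 0) (at 0)" by simp
    show "(Q \<longlongrightarrow> 0) (at 0)" using lim by (simp add: Q_def)
    show "\<forall>\<^sub>F v in at 0. norm (hderiv j \<phi> (x + v) h - hderiv j \<phi> x h - L v) / norm v \<le> Q v"
      using eventually_in_open[OF U]
    proof (rule eventually_mono)
      fix v assume xv: "x + v \<in> U"
      obtain C where C: "\<forall>h\<in>unit_dirs j. norm (hderiv j \<phi> (x + v) h - hderiv j \<phi> x h - hderiv (Suc j) \<phi> x (shift_dir v h)) \<le> C"
        using rem_bdd[OF ml[OF xv] ml[OF U(2)] ml2] by blast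
      have "norm (hderiv j \<phi> (x + v) h - hderiv j \<phi> x h - L v)
          \<le> mnorm j (\<lambda>h. hderiv j \<phi> (x + v) h - hderiv j \<phi> x h - hderiv (Suc j) \<phi> x (shift_dir v h))"
        unfolding L_def by (rule mnorm_upper[where B=C]) (use C h in auto)
      then show "norm (hderiv j \<phi> (x + v) h - hderiv j \<phi> x h - L v) / norm v \<le> Q v"
        unfolding Q_def by (simp add: divide_right_mono)
    qed
  qed
  then have "((\<lambda>y. hderiv j \<phi> y h) has_derivative L) (at x)"
    using blL by (simp add: has_derivative_at)
  then show "(\<lambda>y. hderiv j \<phi> y h) differentiable (at x)" by (rule differentiableI)
qed

lemma GL:
  fixes F :: "'a::real_normed_vector \<Rightarrow> ('c::real_normed_vector \<Rightarrow>\<^sub>L 'b::real_normed_vector)"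
    and D :: "'a \<Rightarrow> 'c \<Rightarrow> 'b" and R :: "'a \<Rightarrow> real"
  assumes lin1: "\<And>v. linear (D v)" and lin2: "\<And>w. linear (\<lambda>v. D v w)"
    and bnd: "\<And>v w. norm v \<le> 1 \<Longrightarrow> norm w \<le> 1 \<Longrightarrow> norm (D v w) \<le> B"
    and rem: "\<forall>\<^sub>F v in at 0. \<forall>w. norm w \<le> 1 \<longrightarrow> norm (blinfun_apply (F (x+v)) w - blinfun_apply (F x) w - D v w) \<le> R v"
    and R: "((\<lambda>v. R v / norm v) \<longlongrightarrow> 0) (at 0)"
  shows "(F has_derivative (\<lambda>v. Blinfun (D v))) (at x)"
proof -
  have b1: "norm (D v w) \<le> B * norm v" if "norm w \<le> 1" for v w
    by (rule lin_unit_bound[OF lin2]) (use bnd that in auto)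
  have b2: "norm (D v w) \<le> (B * norm v) * norm w" for v w
    by (rule lin_unit_bound[OF lin1]) (use b1 in auto)
  have B0: "0 \<le> B"
  proof -
    have "norm (D 0 0) \<le> B" by (rule bnd) auto
    then show ?thesis using norm_ge_zero[of "D 0 0"] by linarith
  qed
  have bl: "bounded_linear (D v)" for v
  proof (rule bounded_linear_intro[where K="B * norm v"])
    show "\<And>x y. D v (x + y) = D v x + D v y" using linear_add[OF lin1] by simp
    show "\<And>r x. D v (r *\<^sub>R x) = r *\<^sub>R D v x" using linear_scale[OF lin1] by simp
    show "\<And>x. norm (D v x) \<le> norm x * (B * norm v)" using b2 by (simp add: mult.commute)
  qed
  have ap: "blinfun_apply (Blinfun (D v)) = D v" for v by (rule bounded_linear_Blinfun_apply[OF bl])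
  have bl2: "bounded_linear (\<lambda>v. Blinfun (D v))"
  proof (rule bounded_linear_intro[where K=B])
    show "\<And>a b. Blinfun (D (a + b)) = Blinfun (D a) + Blinfun (D b)"
      by (rule blinfun_eqI) (simp add: ap blinfun.add_left linear_add[OF lin2])
    show "\<And>r a. Blinfun (D (r *\<^sub>R a)) = r *\<^sub>R Blinfun (D a)"
      by (rule blinfun_eqI) (simp add: ap blinfun.scaleR_left linear_scale[OF lin2])
    fix v
    have "norm (Blinfun (D v)) \<le> B * norm v"
      by (rule norm_blinfun_bound) (use B0 b2 ap in auto)
    then show "norm (Blinfun (D v)) \<le> norm v * B" by (simp add: mult.commute)
  qed
  have "((\<lambda>v. norm (F (x + v) - F x - Blinfun (D v)) / norm v) \<longlongrightarrow> 0) (at 0)"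
  proof (rule tendsto_sandwich[where f="\<lambda>v. 0" and h="\<lambda>v. R v / norm v"])
    show "\<forall>\<^sub>F v in at 0. 0 \<le> norm (F (x + v) - F x - Blinfun (D v)) / norm v" by simp
    show "((\<lambda>v. 0) \<longlongrightarrow> 0) (at 0)" by simp
    show "((\<lambda>v. R v / norm v) \<longlongrightarrow> 0) (at 0)" by (rule R)
    show "\<forall>\<^sub>F v in at 0. norm (F (x + v) - F x - Blinfun (D v)) / norm v \<le> R v / norm v"
      using rem
    proof (rule eventually_mono)
      fix v assume r: "\<forall>w. norm w \<le> 1 \<longrightarrow> norm (blinfun_apply (F (x+v)) w - blinfun_apply (F x) w - D v w) \<le> R v"
      have R0: "0 \<le> R v" using r[rule_format, of 0] by (simp add: linear_0[OF lin1])
      have "norm (F (x + v) - F x - Blinfun (D v)) \<le> R v"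
      proof (rule norm_blinfun_bound[OF R0])
        fix w
        show "norm (blinfun_apply (F (x + v) - F x - Blinfun (D v)) w) \<le> R v * norm w"
        proof (rule lin_unit_bound)
          show "linear (blinfun_apply (F (x + v) - F x - Blinfun (D v)))"
            using blinfun.bounded_linear_right bounded_linear.linear by blast
          fix u :: 'c assume "norm u \<le> 1"
          then show "norm (blinfun_apply (F (x + v) - F x - Blinfun (D v)) u) \<le> R v"
            using r by (simp add: blinfun.diff_left ap)
        qed
      qed
      then show "norm (F (x + v) - F x - Blinfun (D v)) / norm v \<le> R v / norm v"
        by (simp add: divide_right_mono)
    qed
  qed
  then show ?thesis using bl2 by (simp add: has_derivative_at)
qed

lemma FC_ml: "FC m U \<gamma> \<Longrightarrow> j \<le> m \<Longrightarrow> x \<in> U \<Longrightarrow> multilin_bounded j (hderiv j \<gamma> x)"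
  unfolding FC_def by blast
lemma FC_lim: "FC m U \<gamma> \<Longrightarrow> j < m \<Longrightarrow> x \<in> U \<Longrightarrow>
  ((\<lambda>v. mnorm j (\<lambda>h. hderiv j \<gamma> (x + v) h - hderiv j \<gamma> x h
                                          - hderiv (Suc j) \<gamma> x (shift_dir v h)) / norm v) \<longlongrightarrow> 0) (at 0)"
  unfolding FC_def by blast
lemma FC_cont: "FC m U \<gamma> \<Longrightarrow> j \<le> m \<Longrightarrow> x \<in> U \<Longrightarrow>
  ((\<lambda>y. mnorm j (\<lambda>h. hderiv j \<gamma> y h - hderiv j \<gamma> x h)) \<longlongrightarrow> 0) (at x within U)"
  unfolding FC_def by blast

lemma fwd_diff_unit:
  fixes \<gamma> :: "'a::real_normed_vector \<Rightarrow> 'b::real_normed_vector"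
  assumes U: "open U" "x \<in> U" and DI: "\<And>y. y \<in> U \<Longrightarrow> DIat j \<gamma> y"
    and ml1: "\<And>y. y \<in> U \<Longrightarrow> multilin_bounded (Suc j) (hderiv (Suc j) \<gamma> y)"
    and ml2: "multilin_bounded (Suc (Suc j)) (hderiv (Suc (Suc j)) \<gamma> x)"
    and lim: "((\<lambda>v. mnorm (Suc j) (\<lambda>h. hderiv (Suc j) \<gamma> (x + v) h - hderiv (Suc j) \<gamma> x h
                    - hderiv (Suc (Suc j)) \<gamma> x (shift_dir v h)) / norm v) \<longlongrightarrow> 0) (at 0)"
    and h: "h \<in> unit_dirs j"
  shows "(\<lambda>y. hderiv j (Dfun \<gamma>) y h) differentiable (at x)"
proof -
  define D where "D = (\<lambda>v w. hderiv (Suc (Suc j)) \<gamma> x (shift_dir v (h(j:=w))))"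
  define R where "R = (\<lambda>v. mnorm (Suc j) (\<lambda>h. hderiv (Suc j) \<gamma> (x + v) h - hderiv (Suc j) \<gamma> x h
                    - hderiv (Suc (Suc j)) \<gamma> x (shift_dir v h)))"
  obtain B where B: "\<forall>hh\<in>unit_dirs (Suc (Suc j)). norm (hderiv (Suc (Suc j)) \<gamma> x hh) \<le> B"
    using ml2 unfolding multilin_bounded_def by blast
  have "((\<lambda>y. hderiv j (Dfun \<gamma>) y h) has_derivative (\<lambda>v. Blinfun (D v))) (at x)"
  proof (rule GL[where B=B and R=R])
    fix v
    have "linear (\<lambda>w. hderiv (Suc (Suc j)) \<gamma> x ((shift_dir v h)(Suc j := w)))"
      using ml2 unfolding multilin_bounded_def by blast
    then show "linear (D v)" unfolding D_def by (simp add: shift_dir_upd)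
  next
    fix w
    have "linear (\<lambda>v. hderiv (Suc (Suc j)) \<gamma> x ((shift_dir 0 (h(j:=w)))(0 := v)))"
      using ml2 unfolding multilin_bounded_def by blast
    then show "linear (\<lambda>v. D v w)" unfolding D_def by (simp add: shift_dir_upd0[symmetric])
  next
    fix v w :: 'a assume "norm v \<le> 1" "norm w \<le> 1"
    then show "norm (D v w) \<le> B" unfolding D_def
      using B shift_dir_unit[OF unit_dirs_upd[OF h]] by blast
  next
    show "((\<lambda>v. R v / norm v) \<longlongrightarrow> 0) (at 0)" using lim by (simp add: R_def)
  next
    show "\<forall>\<^sub>F v in at 0. \<forall>w. norm w \<le> 1 \<longrightarrow> norm (blinfun_apply (hderiv j (Dfun \<gamma>) (x + v) h) w
              - blinfun_apply (hderiv j (Dfun \<gamma>) x h) w - D v w) \<le> R v"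
      using eventually_in_open[OF U]
    proof (rule eventually_mono)
      fix v assume xv: "x + v \<in> U"
      obtain C where C: "\<forall>h\<in>unit_dirs (Suc j). norm (hderiv (Suc j) \<gamma> (x + v) h - hderiv (Suc j) \<gamma> x h
               - hderiv (Suc (Suc j)) \<gamma> x (shift_dir v h)) \<le> C"
        using rem_bdd[OF ml1[OF xv] ml1[OF U(2)] ml2] by blast
      show "\<forall>w. norm w \<le> 1 \<longrightarrow> norm (blinfun_apply (hderiv j (Dfun \<gamma>) (x + v) h) w
              - blinfun_apply (hderiv j (Dfun \<gamma>) x h) w - D v w) \<le> R v"
      proof (intro allI impI)
        fix w :: 'a assume w: "norm w \<le> 1"
        have e1: "blinfun_apply (hderiv j (Dfun \<gamma>) (x + v) h) w = hderiv (Suc j) \<gamma> (x + v) (h(j:=w))"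
          using DI[OF xv] unfolding DIat_def by blast
        have e2: "blinfun_apply (hderiv j (Dfun \<gamma>) x h) w = hderiv (Suc j) \<gamma> x (h(j:=w))"
          using DI[OF U(2)] unfolding DIat_def by blast
        show "norm (blinfun_apply (hderiv j (Dfun \<gamma>) (x + v) h) w
              - blinfun_apply (hderiv j (Dfun \<gamma>) x h) w - D v w) \<le> R v"
          unfolding e1 e2 D_def R_def
          by (rule mnorm_upper[where B=C]) (use C in blast, rule unit_dirs_upd[OF h w])
      qed
    qed
  qed
  then show ?thesis by (rule differentiableI)
qed

lemma DI_fwd:
  fixes \<gamma> :: "'a::real_normed_vector \<Rightarrow> 'b::real_normed_vector"
  assumes U: "open U" and FC: "FC (Suc k) U \<gamma>"
  shows "j \<le> k \<Longrightarrow> y \<in> U \<Longrightarrow> DIat j \<gamma> y"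
proof (induction j arbitrary: y)
  case 0
  show ?case by (rule DIat0) (rule FC_ml[OF FC _ 0(2)], simp)
next
  case (Suc j)
  have DIj: "\<And>y. y \<in> U \<Longrightarrow> DIat j \<gamma> y" using Suc by simp
  show ?case
  proof (rule DIat_step[OF U Suc.prems(2) DIj])
    fix h
    show "(\<lambda>y. hderiv j (Dfun \<gamma>) y h) differentiable (at y)"
    proof (rule diff_scale[OF U Suc.prems(2)])
      fix y' i hh assume y': "y' \<in> U" and i: "i < j"
      have "multilin_bounded j (hderiv j (Dfun \<gamma>) y')"
        using MLEQ[OF DIj[OF y']] FC_ml[OF FC _ y', of "Suc j"] Suc.prems by simp
      then show "linear (\<lambda>v. hderiv j (Dfun \<gamma>) y' (hh(i := v)))"
        using i unfolding multilin_bounded_def by blast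
    next
      fix hh :: "nat \<Rightarrow> 'a" assume hh: "hh \<in> unit_dirs j"
      show "(\<lambda>y'. hderiv j (Dfun \<gamma>) y' hh) differentiable (at y)"
        by (rule fwd_diff_unit[OF U Suc.prems(2) DIj _ _ _ hh])
           (use FC_ml[OF FC] FC_lim[OF FC] Suc.prems in auto)
    qed
  qed
qed

lemma DI_bwd:
  fixes \<gamma> :: "'a::real_normed_vector \<Rightarrow> 'b::real_normed_vector"
  assumes U: "open U" and FC1: "FC 1 U \<gamma>" and FC: "FC k U (Dfun \<gamma>)"
  shows "j \<le> k \<Longrightarrow> y \<in> U \<Longrightarrow> DIat j \<gamma> y"
proof (induction j arbitrary: y)
  case 0
  show ?case by (rule DIat0) (rule FC_ml[OF FC1 _ 0(2)], simp)
next
  case (Suc j)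
  have DIj: "\<And>y. y \<in> U \<Longrightarrow> DIat j \<gamma> y" using Suc by simp
  show ?case
  proof (rule DIat_step[OF U Suc.prems(2) DIj])
    fix h
    show "(\<lambda>y. hderiv j (Dfun \<gamma>) y h) differentiable (at y)"
      by (rule FC_deriv_diff[OF U Suc.prems(2)]) (use FC_ml[OF FC] FC_lim[OF FC] Suc.prems in auto)
  qed
qed

lemma diff_bdd:
  assumes "multilin_bounded n g1" "multilin_bounded n g2"
  shows "\<exists>C. \<forall>h\<in>unit_dirs n. norm (g1 h - g2 h) \<le> C"
proof -
  obtain B1 where B1: "\<forall>h\<in>unit_dirs n. norm (g1 h) \<le> B1"
    using assms(1) unfolding multilin_bounded_def by blast
  obtain B2 where B2: "\<forall>h\<in>unit_dirs n. norm (g2 h) \<le> B2"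
    using assms(2) unfolding multilin_bounded_def by blast
  have "norm (g1 h - g2 h) \<le> B1 + B2" if "h \<in> unit_dirs n" for h
  proof -
    have "norm (g1 h - g2 h) \<le> norm (g1 h) + norm (g2 h)" by (rule norm_triangle_ineq4)
    then show ?thesis using B1 B2 that by fastforce
  qed
  then show ?thesis by blast
qed

lemma mnorm_D_diff:
  fixes \<gamma> \<eta> :: "'a::real_normed_vector \<Rightarrow> 'b::real_normed_vector"
  assumes "DIat j \<gamma> x" "DIat j \<eta> y"
    "multilin_bounded (Suc j) (hderiv (Suc j) \<gamma> x)" "multilin_bounded (Suc j) (hderiv (Suc j) \<eta> y)"
  shows "mnorm j (\<lambda>h. hderiv j (Dfun \<gamma>) x h - hderiv j (Dfun \<eta>) y h)
       = mnorm (Suc j) (\<lambda>h. hderiv (Suc j) \<gamma> x h - hderiv (Suc j) \<eta> y h)"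
proof -
  obtain C where C: "\<forall>h\<in>unit_dirs (Suc j). norm (hderiv (Suc j) \<gamma> x h - hderiv (Suc j) \<eta> y h) \<le> C"
    using diff_bdd[OF assms(3,4)] by blast
  show ?thesis
  proof (rule mnorm_blinfun_eq(1)[where B=C])
    fix h w
    show "blinfun_apply (hderiv j (Dfun \<gamma>) x h - hderiv j (Dfun \<eta>) y h) w
        = hderiv (Suc j) \<gamma> x (h(j := w)) - hderiv (Suc j) \<eta> y (h(j := w))"
      using assms(1,2) unfolding DIat_def by (simp add: blinfun.diff_left)
  next
    fix h :: "nat \<Rightarrow> 'a" assume "h \<in> unit_dirs (Suc j)"
    then show "norm (hderiv (Suc j) \<gamma> x h - hderiv (Suc j) \<eta> y h) \<le> C" using C by blast
  qed
qed

lemma mnorm_D: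
  fixes \<gamma> :: "'a::real_normed_vector \<Rightarrow> 'b::real_normed_vector"
  assumes "DIat j \<gamma> x" "multilin_bounded (Suc j) (hderiv (Suc j) \<gamma> x)"
  shows "mnorm j (hderiv j (Dfun \<gamma>) x) = mnorm (Suc j) (hderiv (Suc j) \<gamma> x)"
proof -
  obtain C where C: "\<forall>h\<in>unit_dirs (Suc j). norm (hderiv (Suc j) \<gamma> x h) \<le> C"
    using assms(2) unfolding multilin_bounded_def by blast
  show ?thesis
  proof (rule mnorm_blinfun_eq(1)[where B=C])
    fix h w
    show "blinfun_apply (hderiv j (Dfun \<gamma>) x h) w = hderiv (Suc j) \<gamma> x (h(j := w))"
      using assms(1) unfolding DIat_def by blast
  next
    fix h :: "nat \<Rightarrow> 'a" assume "h \<in> unit_dirs (Suc j)"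
    then show "norm (hderiv (Suc j) \<gamma> x h) \<le> C" using C by blast
  qed
qed

lemma lim_eq:
  fixes \<gamma> :: "'a::real_normed_vector \<Rightarrow> 'b::real_normed_vector"
  assumes U: "open U" "x \<in> U" and DI: "\<And>y. y \<in> U \<Longrightarrow> DIat j \<gamma> y" and DIS: "DIat (Suc j) \<gamma> x"
    and ml1: "\<And>y. y \<in> U \<Longrightarrow> multilin_bounded (Suc j) (hderiv (Suc j) \<gamma> y)"
    and ml2: "multilin_bounded (Suc (Suc j)) (hderiv (Suc (Suc j)) \<gamma> x)"
  shows "((\<lambda>v. mnorm j (\<lambda>h. hderiv j (Dfun \<gamma>) (x + v) h - hderiv j (Dfun \<gamma>) x h
                    - hderiv (Suc j) (Dfun \<gamma>) x (shift_dir v h)) / norm v) \<longlongrightarrow> 0) (at 0)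
     \<longleftrightarrow> ((\<lambda>v. mnorm (Suc j) (\<lambda>h. hderiv (Suc j) \<gamma> (x + v) h - hderiv (Suc j) \<gamma> x h
                    - hderiv (Suc (Suc j)) \<gamma> x (shift_dir v h)) / norm v) \<longlongrightarrow> 0) (at 0)"
proof (rule tendsto_cong)
  show "\<forall>\<^sub>F v in at 0. mnorm j (\<lambda>h. hderiv j (Dfun \<gamma>) (x + v) h - hderiv j (Dfun \<gamma>) x h
                    - hderiv (Suc j) (Dfun \<gamma>) x (shift_dir v h)) / norm v
      = mnorm (Suc j) (\<lambda>h. hderiv (Suc j) \<gamma> (x + v) h - hderiv (Suc j) \<gamma> x h
                    - hderiv (Suc (Suc j)) \<gamma> x (shift_dir v h)) / norm v"
    using eventually_in_open[OF U]
  proof (rule eventually_mono)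
    fix v assume xv: "x + v \<in> U"
    obtain C where C: "\<forall>h\<in>unit_dirs (Suc j). norm (hderiv (Suc j) \<gamma> (x + v) h - hderiv (Suc j) \<gamma> x h
               - hderiv (Suc (Suc j)) \<gamma> x (shift_dir v h)) \<le> C"
      using rem_bdd[OF ml1[OF xv] ml1[OF U(2)] ml2] by blast
    have "mnorm j (\<lambda>h. hderiv j (Dfun \<gamma>) (x + v) h - hderiv j (Dfun \<gamma>) x h
                    - hderiv (Suc j) (Dfun \<gamma>) x (shift_dir v h))
      = mnorm (Suc j) (\<lambda>h. hderiv (Suc j) \<gamma> (x + v) h - hderiv (Suc j) \<gamma> x h
                    - hderiv (Suc (Suc j)) \<gamma> x (shift_dir v h))"
    proof (rule mnorm_blinfun_eq(1)[where B=C])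
      fix h w
      have e1: "blinfun_apply (hderiv j (Dfun \<gamma>) (x + v) h) w = hderiv (Suc j) \<gamma> (x + v) (h(j:=w))"
        using DI[OF xv] unfolding DIat_def by blast
      have e2: "blinfun_apply (hderiv j (Dfun \<gamma>) x h) w = hderiv (Suc j) \<gamma> x (h(j:=w))"
        using DI[OF U(2)] unfolding DIat_def by blast
      have e3: "blinfun_apply (hderiv (Suc j) (Dfun \<gamma>) x (shift_dir v h)) w
          = hderiv (Suc (Suc j)) \<gamma> x (shift_dir v (h(j:=w)))"
        using DIS unfolding DIat_def shift_dir_upd by blast
      show "blinfun_apply (hderiv j (Dfun \<gamma>) (x + v) h - hderiv j (Dfun \<gamma>) x h
                    - hderiv (Suc j) (Dfun \<gamma>) x (shift_dir v h)) w
          = hderiv (Suc j) \<gamma> (x + v) (h(j := w)) - hderiv (Suc j) \<gamma> x (h(j := w))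
                    - hderiv (Suc (Suc j)) \<gamma> x (shift_dir v (h(j := w)))"
        unfolding blinfun.diff_left e1 e2 e3 ..
    next
      fix h :: "nat \<Rightarrow> 'a" assume "h \<in> unit_dirs (Suc j)"
      then show "norm (hderiv (Suc j) \<gamma> (x + v) h - hderiv (Suc j) \<gamma> x h
               - hderiv (Suc (Suc j)) \<gamma> x (shift_dir v h)) \<le> C" using C by blast
    qed
    then show "mnorm j (\<lambda>h. hderiv j (Dfun \<gamma>) (x + v) h - hderiv j (Dfun \<gamma>) x h
                    - hderiv (Suc j) (Dfun \<gamma>) x (shift_dir v h)) / norm v
      = mnorm (Suc j) (\<lambda>h. hderiv (Suc j) \<gamma> (x + v) h - hderiv (Suc j) \<gamma> x h
                    - hderiv (Suc (Suc j)) \<gamma> x (shift_dir v h)) / norm v" by simp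
  qed
qed

lemma cont_eq:
  fixes \<gamma> :: "'a::real_normed_vector \<Rightarrow> 'b::real_normed_vector"
  assumes U: "x \<in> U" and DI: "\<And>y. y \<in> U \<Longrightarrow> DIat j \<gamma> y"
    and ml: "\<And>y. y \<in> U \<Longrightarrow> multilin_bounded (Suc j) (hderiv (Suc j) \<gamma> y)"
  shows "((\<lambda>y. mnorm j (\<lambda>h. hderiv j (Dfun \<gamma>) y h - hderiv j (Dfun \<gamma>) x h)) \<longlongrightarrow> 0) (at x within U)
     \<longleftrightarrow> ((\<lambda>y. mnorm (Suc j) (\<lambda>h. hderiv (Suc j) \<gamma> y h - hderiv (Suc j) \<gamma> x h)) \<longlongrightarrow> 0) (at x within U)"
proof (rule tendsto_cong)
  have ev: "eventually (\<lambda>y. y \<in> U) (at x within U)" by (simp add: eventually_at_filter)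
  show "\<forall>\<^sub>F y in at x within U. mnorm j (\<lambda>h. hderiv j (Dfun \<gamma>) y h - hderiv j (Dfun \<gamma>) x h)
      = mnorm (Suc j) (\<lambda>h. hderiv (Suc j) \<gamma> y h - hderiv (Suc j) \<gamma> x h)"
    using ev by (rule eventually_mono) (rule mnorm_D_diff[OF DI DI[OF U] ml ml[OF U]])
qed

lemma FC_equiv:
  fixes \<gamma> :: "'a::real_normed_vector \<Rightarrow> 'b::real_normed_vector"
  assumes U: "open U" and FC1: "FC 1 U \<gamma>" and DI: "\<And>j y. j \<le> k \<Longrightarrow> y \<in> U \<Longrightarrow> DIat j \<gamma> y"
  shows "FC (Suc k) U \<gamma> \<longleftrightarrow> FC k U (Dfun \<gamma>)"
proof -
  have MLeq: "(\<forall>j\<le>Suc k. \<forall>x\<in>U. multilin_bounded j (hderiv j \<gamma> x))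
     \<longleftrightarrow> (\<forall>j\<le>k. \<forall>x\<in>U. multilin_bounded j (hderiv j (Dfun \<gamma>) x))"
  proof
    assume A: "\<forall>j\<le>Suc k. \<forall>x\<in>U. multilin_bounded j (hderiv j \<gamma> x)"
    show "\<forall>j\<le>k. \<forall>x\<in>U. multilin_bounded j (hderiv j (Dfun \<gamma>) x)"
      using A MLEQ[OF DI] by simp
  next
    assume B: "\<forall>j\<le>k. \<forall>x\<in>U. multilin_bounded j (hderiv j (Dfun \<gamma>) x)"
    show "\<forall>j\<le>Suc k. \<forall>x\<in>U. multilin_bounded j (hderiv j \<gamma> x)"
    proof (intro allI impI ballI)
      fix j x assume j: "j \<le> Suc k" and x: "x \<in> U"
      show "multilin_bounded j (hderiv j \<gamma> x)"
      proof (cases j)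
        case 0 then show ?thesis using FC_ml[OF FC1 _ x] by simp
      next
        case (Suc j') then show ?thesis using B MLEQ[OF DI[of j' x]] j x by simp
      qed
    qed
  qed
  have LIMeq: "((\<lambda>v. mnorm j (\<lambda>h. hderiv j (Dfun \<gamma>) (x + v) h - hderiv j (Dfun \<gamma>) x h
                    - hderiv (Suc j) (Dfun \<gamma>) x (shift_dir v h)) / norm v) \<longlongrightarrow> 0) (at 0)
     \<longleftrightarrow> ((\<lambda>v. mnorm (Suc j) (\<lambda>h. hderiv (Suc j) \<gamma> (x + v) h - hderiv (Suc j) \<gamma> x h
                    - hderiv (Suc (Suc j)) \<gamma> x (shift_dir v h)) / norm v) \<longlongrightarrow> 0) (at 0)"
    if MLa: "\<forall>j\<le>Suc k. \<forall>x\<in>U. multilin_bounded j (hderiv j \<gamma> x)" and j: "j < k" and x: "x \<in> U" for j x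
    by (rule lim_eq[OF U x]) (use MLa DI j x in auto)
  have CONTeq: "((\<lambda>y. mnorm j (\<lambda>h. hderiv j (Dfun \<gamma>) y h - hderiv j (Dfun \<gamma>) x h)) \<longlongrightarrow> 0) (at x within U)
     \<longleftrightarrow> ((\<lambda>y. mnorm (Suc j) (\<lambda>h. hderiv (Suc j) \<gamma> y h - hderiv (Suc j) \<gamma> x h)) \<longlongrightarrow> 0) (at x within U)"
    if MLa: "\<forall>j\<le>Suc k. \<forall>x\<in>U. multilin_bounded j (hderiv j \<gamma> x)" and j: "j \<le> k" and x: "x \<in> U" for j x
    by (rule cont_eq[OF x]) (use MLa DI j x in auto)
  show ?thesis
  proof
    assume A: "FC (Suc k) U \<gamma>"
    have MLa: "\<forall>j\<le>Suc k. \<forall>x\<in>U. multilin_bounded j (hderiv j \<gamma> x)" using A unfolding FC_def by blast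
    show "FC k U (Dfun \<gamma>)" unfolding FC_def
    proof (intro conjI allI impI ballI)
      fix j x assume "j \<le> k" "x \<in> U"
      then show "multilin_bounded j (hderiv j (Dfun \<gamma>) x)" using MLa MLeq by blast
    next
      fix j x assume j: "j < k" and x: "x \<in> U"
      show "((\<lambda>v. mnorm j (\<lambda>h. hderiv j (Dfun \<gamma>) (x + v) h - hderiv j (Dfun \<gamma>) x h
                    - hderiv (Suc j) (Dfun \<gamma>) x (shift_dir v h)) / norm v) \<longlongrightarrow> 0) (at 0)"
        using LIMeq[OF MLa j x] FC_lim[OF A _ x, of "Suc j"] j by simp
    next
      fix j x assume j: "j \<le> k" and x: "x \<in> U"
      show "((\<lambda>y. mnorm j (\<lambda>h. hderiv j (Dfun \<gamma>) y h - hderiv j (Dfun \<gamma>) x h)) \<longlongrightarrow> 0) (at x within U)"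
        using CONTeq[OF MLa j x] FC_cont[OF A _ x, of "Suc j"] j by simp
    qed
  next
    assume B: "FC k U (Dfun \<gamma>)"
    have MLa: "\<forall>j\<le>Suc k. \<forall>x\<in>U. multilin_bounded j (hderiv j \<gamma> x)"
      using B MLeq unfolding FC_def by blast
    show "FC (Suc k) U \<gamma>" unfolding FC_def
    proof (intro conjI allI impI ballI)
      fix j x assume "j \<le> Suc k" "x \<in> U"
      then show "multilin_bounded j (hderiv j \<gamma> x)" using MLa by blast
    next
      fix j x assume j: "j < Suc k" and x: "x \<in> U"
      show "((\<lambda>v. mnorm j (\<lambda>h. hderiv j \<gamma> (x + v) h - hderiv j \<gamma> x h
                    - hderiv (Suc j) \<gamma> x (shift_dir v h)) / norm v) \<longlongrightarrow> 0) (at 0)"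
      proof (cases j)
        case 0 then show ?thesis using FC_lim[OF FC1 _ x, of 0] by simp
      next
        case (Suc j')
        then show ?thesis using LIMeq[OF MLa _ x, of j'] FC_lim[OF B _ x, of j'] j by simp
      qed
    next
      fix j x assume j: "j \<le> Suc k" and x: "x \<in> U"
      show "((\<lambda>y. mnorm j (\<lambda>h. hderiv j \<gamma> y h - hderiv j \<gamma> x h)) \<longlongrightarrow> 0) (at x within U)"
      proof (cases j)
        case 0 then show ?thesis using FC_cont[OF FC1 _ x, of 0] by simp
      next
        case (Suc j')
        then show ?thesis using CONTeq[OF MLa _ x, of j'] FC_cont[OF B _ x, of j'] j by simp
      qed
    qed
  qed
qed

lemma FC_mono: "FC m U \<gamma> \<Longrightarrow> n \<le> m \<Longrightarrow> FC n U \<gamma>"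
  unfolding FC_def by (meson le_trans less_le_trans)

lemma CW_iff:
  fixes \<gamma> :: "'a::real_normed_vector \<Rightarrow> 'b::real_normed_vector"
  assumes U: "open U" and FC1: "FC 1 U \<gamma>"
  shows "\<gamma> \<in> CW (Suc k) U W \<longleftrightarrow> (Dfun \<gamma> \<in> CW k U W \<and> \<gamma> \<in> CW 0 U W)"
proof -
  have SUPeq: "(SUP x\<in>U. \<bar>f x\<bar> * ereal (mnorm j (hderiv j (Dfun \<gamma>) x)))
      = (SUP x\<in>U. \<bar>f x\<bar> * ereal (mnorm (Suc j) (hderiv (Suc j) \<gamma> x)))"
    if DI: "\<And>y. y \<in> U \<Longrightarrow> DIat j \<gamma> y"
      and MLa: "\<And>y. y \<in> U \<Longrightarrow> multilin_bounded (Suc j) (hderiv (Suc j) \<gamma> y)" for j and f :: "'a \<Rightarrow> ereal"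
    by (rule SUP_cong) (simp_all add: mnorm_D[OF DI MLa])
  show ?thesis
  proof
    assume A: "\<gamma> \<in> CW (Suc k) U W"
    then have FC: "FC (Suc k) U \<gamma>" by (simp add: CW_def)
    have DI: "\<And>j y. j \<le> k \<Longrightarrow> y \<in> U \<Longrightarrow> DIat j \<gamma> y" using DI_fwd[OF U FC] by blast
    have FCD: "FC k U (Dfun \<gamma>)" using FC_equiv[OF U FC1 DI] FC by simp
    have "Dfun \<gamma> \<in> CW k U W" unfolding CW_def
    proof (intro CollectI conjI FCD ballI allI impI)
      fix f j assume f: "f \<in> W" and j: "j \<le> k"
      have "(SUP x\<in>U. \<bar>f x\<bar> * ereal (mnorm j (hderiv j (Dfun \<gamma>) x)))
          = (SUP x\<in>U. \<bar>f x\<bar> * ereal (mnorm (Suc j) (hderiv (Suc j) \<gamma> x)))"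
        by (rule SUPeq) (use DI FC_ml[OF FC] j in auto)
      also have "\<dots> < \<infinity>" using A f j unfolding CW_def by auto
      finally show "(SUP x\<in>U. \<bar>f x\<bar> * ereal (mnorm j (hderiv j (Dfun \<gamma>) x))) < \<infinity>" .
    qed
    moreover have "\<gamma> \<in> CW 0 U W" using A FC_mono[OF FC] unfolding CW_def by auto
    ultimately show "Dfun \<gamma> \<in> CW k U W \<and> \<gamma> \<in> CW 0 U W" by blast
  next
    assume B: "Dfun \<gamma> \<in> CW k U W \<and> \<gamma> \<in> CW 0 U W"
    then have FCD: "FC k U (Dfun \<gamma>)" by (simp add: CW_def)
    have DI: "\<And>j y. j \<le> k \<Longrightarrow> y \<in> U \<Longrightarrow> DIat j \<gamma> y" using DI_bwd[OF U FC1 FCD] by blast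
    have FC: "FC (Suc k) U \<gamma>" using FC_equiv[OF U FC1 DI] FCD by simp
    show "\<gamma> \<in> CW (Suc k) U W" unfolding CW_def
    proof (intro CollectI conjI FC ballI allI impI)
      fix f j assume f: "f \<in> W" and j: "j \<le> Suc k"
      show "(SUP x\<in>U. \<bar>f x\<bar> * ereal (mnorm j (hderiv j \<gamma> x))) < \<infinity>"
      proof (cases j)
        case 0 then show ?thesis using B f unfolding CW_def by auto
      next
        case (Suc j')
        have "(SUP x\<in>U. \<bar>f x\<bar> * ereal (mnorm j' (hderiv j' (Dfun \<gamma>) x)))
          = (SUP x\<in>U. \<bar>f x\<bar> * ereal (mnorm (Suc j') (hderiv (Suc j') \<gamma> x)))"
          by (rule SUPeq) (use DI FC_ml[OF FC] j Suc in auto)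
        moreover have "(SUP x\<in>U. \<bar>f x\<bar> * ereal (mnorm j' (hderiv j' (Dfun \<gamma>) x))) < \<infinity>"
          using B f j Suc unfolding CW_def by auto
        ultimately show ?thesis using Suc by simp
      qed
    qed
  qed
qed

lemma topspace_CW_top: "topspace (CW_top m U W) = CW m U W"
  unfolding CW_top_def topology_generated_by_topspace by auto

lemma mnorm_tri:
  fixes a b c :: "(nat \<Rightarrow> 'a::real_normed_vector) \<Rightarrow> 'b::real_normed_vector"
  assumes "\<And>h. h \<in> unit_dirs j \<Longrightarrow> norm (a h - b h) \<le> B1"
    "\<And>h. h \<in> unit_dirs j \<Longrightarrow> norm (b h - c h) \<le> B2"
  shows "mnorm j (\<lambda>h. a h - c h) \<le> mnorm j (\<lambda>h. a h - b h) + mnorm j (\<lambda>h. b h - c h)"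
proof (rule mnorm_least)
  fix h :: "nat \<Rightarrow> 'a" assume h: "h \<in> unit_dirs j"
  show "norm (a h - c h) \<le> mnorm j (\<lambda>h. a h - b h) + mnorm j (\<lambda>h. b h - c h)"
    by (rule norm_diff_triangle_le) (rule mnorm_upper[OF _ h], rule assms, assumption)+
qed

lemma MLonCW: "\<gamma> \<in> CW m U W \<Longrightarrow> j \<le> m \<Longrightarrow> x \<in> U \<Longrightarrow> multilin_bounded j (hderiv j \<gamma> x)"
  unfolding CW_def using FC_ml by blast

lemma mnorm_diff_nonneg:
  assumes "multilin_bounded j (hderiv j \<eta> x)" "multilin_bounded j (hderiv j \<zeta> x)"
  shows "0 \<le> mnorm j (\<lambda>h. hderiv j \<eta> x h - hderiv j \<zeta> x h)"
proof -
  obtain C where "\<forall>h\<in>unit_dirs j. norm (hderiv j \<eta> x h - hderiv j \<zeta> x h) \<le> C"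
    using diff_bdd[OF assms] by blast
  then show ?thesis by (intro mnorm_nonneg[where B=C]) blast
qed

lemma wsemi_self:
  fixes \<eta> :: "'a::real_normed_vector \<Rightarrow> 'b::real_normed_vector"
  shows "U \<noteq> {} \<Longrightarrow> wsemi U f j \<eta> \<eta> = 0"
proof -
  assume U: "U \<noteq> {}"
  have ne: "unit_dirs j \<noteq> ({} :: (nat \<Rightarrow> 'a) set)" using unit_dirs_0 by blast
  have "mnorm j (\<lambda>h. hderiv j \<eta> x h - hderiv j \<eta> x h) = 0" for x
    unfolding mnorm_def using ne by simp
  moreover have "\<bar>f x\<bar> * ereal 0 = 0" for x by (simp add: zero_ereal_def[symmetric])
  ultimately show ?thesis using U by (simp add: wsemi_def zero_ereal_def[symmetric])
qed

lemma wsemi_nonneg: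
  assumes U: "U \<noteq> {}" and "\<And>x. x \<in> U \<Longrightarrow> multilin_bounded j (hderiv j \<eta> x)"
    "\<And>x. x \<in> U \<Longrightarrow> multilin_bounded j (hderiv j \<zeta> x)"
  shows "0 \<le> wsemi U f j \<eta> \<zeta>"
proof -
  obtain x where x: "x \<in> U" using U by blast
  have "0 \<le> \<bar>f x\<bar> * ereal (mnorm j (\<lambda>h. hderiv j \<eta> x h - hderiv j \<zeta> x h))"
    using mnorm_diff_nonneg[OF assms(2,3)[OF x]] by simp
  also have "\<dots> \<le> wsemi U f j \<eta> \<zeta>" unfolding wsemi_def by (rule SUP_upper[OF x])
  finally show ?thesis .
qed

lemma wsemi_tri:
  assumes "\<And>x. x \<in> U \<Longrightarrow> multilin_bounded j (hderiv j \<eta> x)"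
    "\<And>x. x \<in> U \<Longrightarrow> multilin_bounded j (hderiv j \<zeta> x)"
    "\<And>x. x \<in> U \<Longrightarrow> multilin_bounded j (hderiv j \<xi> x)"
  shows "wsemi U f j \<eta> \<xi> \<le> wsemi U f j \<eta> \<zeta> + wsemi U f j \<zeta> \<xi>"
  unfolding wsemi_def
proof (rule SUP_least)
  fix x assume x: "x \<in> U"
  define m1 where "m1 = mnorm j (\<lambda>h. hderiv j \<eta> x h - hderiv j \<zeta> x h)"
  define m2 where "m2 = mnorm j (\<lambda>h. hderiv j \<zeta> x h - hderiv j \<xi> x h)"
  obtain C1 where C1: "\<forall>h\<in>unit_dirs j. norm (hderiv j \<eta> x h - hderiv j \<zeta> x h) \<le> C1"
    using diff_bdd[OF assms(1,2)[OF x]] by blast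
  obtain C2 where C2: "\<forall>h\<in>unit_dirs j. norm (hderiv j \<zeta> x h - hderiv j \<xi> x h) \<le> C2"
    using diff_bdd[OF assms(2,3)[OF x]] by blast
  have t: "mnorm j (\<lambda>h. hderiv j \<eta> x h - hderiv j \<xi> x h) \<le> m1 + m2"
    unfolding m1_def m2_def by (rule mnorm_tri) (use C1 C2 in blast)+
  have n1: "0 \<le> m1" unfolding m1_def by (rule mnorm_diff_nonneg[OF assms(1,2)[OF x]])
  have n2: "0 \<le> m2" unfolding m2_def by (rule mnorm_diff_nonneg[OF assms(2,3)[OF x]])
  have "\<bar>f x\<bar> * ereal (mnorm j (\<lambda>h. hderiv j \<eta> x h - hderiv j \<xi> x h)) \<le> \<bar>f x\<bar> * ereal (m1 + m2)"
    by (rule ereal_mult_left_mono) (use t in auto)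
  also have "\<dots> = \<bar>f x\<bar> * ereal m1 + \<bar>f x\<bar> * ereal m2"
    using ereal_right_distrib[of "ereal m1" "ereal m2" "\<bar>f x\<bar>"] n1 n2 by simp
  also have "\<dots> \<le> (SUP x\<in>U. \<bar>f x\<bar> * ereal (mnorm j (\<lambda>h. hderiv j \<eta> x h - hderiv j \<zeta> x h)))
                 + (SUP x\<in>U. \<bar>f x\<bar> * ereal (mnorm j (\<lambda>h. hderiv j \<zeta> x h - hderiv j \<xi> x h)))"
    unfolding m1_def m2_def by (intro add_mono SUP_upper x)
  finally show "\<bar>f x\<bar> * ereal (mnorm j (\<lambda>h. hderiv j \<eta> x h - hderiv j \<xi> x h))
     \<le> (SUP x\<in>U. \<bar>f x\<bar> * ereal (mnorm j (\<lambda>h. hderiv j \<eta> x h - hderiv j \<zeta> x h)))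
                 + (SUP x\<in>U. \<bar>f x\<bar> * ereal (mnorm j (\<lambda>h. hderiv j \<zeta> x h - hderiv j \<xi> x h)))" .
qed

lemma CW_open_crit:
  assumes U: "U \<noteq> {}" and P: "P \<subseteq> CW m U W"
    and crit: "\<And>\<eta>0. \<eta>0 \<in> P \<Longrightarrow> \<exists>f\<in>W. \<exists>j\<le>m. \<exists>\<delta>>0. {\<eta>\<in>CW m U W. wsemi U f j \<eta> \<eta>0 < ereal \<delta>} \<subseteq> P"
  shows "openin (CW_top m U W) P"
proof (subst openin_subopen, intro ballI)
  fix \<eta>0 assume e: "\<eta>0 \<in> P"
  obtain f j \<delta> where f: "f \<in> W" "j \<le> m" "\<delta> > 0" and sub: "{\<eta>\<in>CW m U W. wsemi U f j \<eta> \<eta>0 < ereal \<delta>} \<subseteq> P"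
    using crit[OF e] by blast
  have "openin (CW_top m U W) {\<eta>\<in>CW m U W. wsemi U f j \<eta> \<eta>0 < ereal \<delta>}"
    unfolding CW_top_def by (rule topology_generated_by_Basis) (use f e P in blast)
  moreover have "\<eta>0 \<in> {\<eta>\<in>CW m U W. wsemi U f j \<eta> \<eta>0 < ereal \<delta>}"
  proof -
    have "wsemi U f j \<eta>0 \<eta>0 = 0" by (rule wsemi_self[OF U])
    then show ?thesis using e P f by auto
  qed
  ultimately show "\<exists>T. openin (CW_top m U W) T \<and> \<eta>0 \<in> T \<and> T \<subseteq> P" using sub by blast
qed

lemma pre_ball_open:
  fixes g :: "('a::real_normed_vector \<Rightarrow> 'b::real_normed_vector) \<Rightarrow> ('a \<Rightarrow> 'c::real_normed_vector)"
  assumes U: "U \<noteq> {}" and maps: "\<And>\<eta>. \<eta> \<in> CW m U W \<Longrightarrow> g \<eta> \<in> CW m' U W"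
    and \<xi>: "\<xi> \<in> CW m' U W" and j: "j \<le> m'" and f: "f \<in> W" and jj: "jj \<le> m"
    and eq: "\<And>\<eta> \<eta>0. \<eta> \<in> CW m U W \<Longrightarrow> \<eta>0 \<in> CW m U W \<Longrightarrow> wsemi U f jj \<eta> \<eta>0 = wsemi U f j (g \<eta>) (g \<eta>0)"
  shows "openin (CW_top m U W) {\<eta>\<in>CW m U W. wsemi U f j (g \<eta>) \<xi> < ereal \<epsilon>}"
proof (rule CW_open_crit[OF U])
  show "{\<eta> \<in> CW m U W. wsemi U f j (g \<eta>) \<xi> < ereal \<epsilon>} \<subseteq> CW m U W" by blast
  fix \<eta>0 assume e0: "\<eta>0 \<in> {\<eta> \<in> CW m U W. wsemi U f j (g \<eta>) \<xi> < ereal \<epsilon>}"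
  then have e0C: "\<eta>0 \<in> CW m U W" and lt: "wsemi U f j (g \<eta>0) \<xi> < ereal \<epsilon>" by auto
  have ge: "0 \<le> wsemi U f j (g \<eta>0) \<xi>"
    by (rule wsemi_nonneg[OF U]) (use MLonCW maps[OF e0C] \<xi> j in blast)+
  obtain r where r: "wsemi U f j (g \<eta>0) \<xi> = ereal r" using ge lt
    by (cases "wsemi U f j (g \<eta>0) \<xi>") auto
  have rl: "r < \<epsilon>" using lt r by simp
  have "{\<eta>\<in>CW m U W. wsemi U f jj \<eta> \<eta>0 < ereal (\<epsilon> - r)} \<subseteq> {\<eta> \<in> CW m U W. wsemi U f j (g \<eta>) \<xi> < ereal \<epsilon>}"
  proof safe
    fix \<eta> assume eC: "\<eta> \<in> CW m U W" and b: "wsemi U f jj \<eta> \<eta>0 < ereal (\<epsilon> - r)"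
    have "wsemi U f j (g \<eta>) \<xi> \<le> wsemi U f j (g \<eta>) (g \<eta>0) + wsemi U f j (g \<eta>0) \<xi>"
      by (rule wsemi_tri) (use MLonCW maps[OF eC] maps[OF e0C] \<xi> j in blast)+
    also have "\<dots> = wsemi U f jj \<eta> \<eta>0 + ereal r" using eq[OF eC e0C] r by simp
    also have "\<dots> < ereal \<epsilon>" using b by (cases "wsemi U f jj \<eta> \<eta>0") auto
    finally show "wsemi U f j (g \<eta>) \<xi> < ereal \<epsilon>" .
  qed
  moreover have "\<epsilon> - r > 0" using rl by simp
  ultimately show "\<exists>f'\<in>W. \<exists>j'\<le>m. \<exists>\<delta>>0. {\<eta> \<in> CW m U W. wsemi U f' j' \<eta> \<eta>0 < ereal \<delta>}
      \<subseteq> {\<eta> \<in> CW m U W. wsemi U f j (g \<eta>) \<xi> < ereal \<epsilon>}"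
    using f jj by blast
qed

lemma CW_Suc_facts:
  fixes \<eta> :: "'a::real_normed_vector \<Rightarrow> 'b::real_normed_vector"
  assumes U: "open U" and e: "\<eta> \<in> CW (Suc k) U W"
  shows "Dfun \<eta> \<in> CW k U W" "\<eta> \<in> CW 0 U W"
proof -
  have "FC 1 U \<eta>" using e FC_mono[of "Suc k" U \<eta> 1] unfolding CW_def by auto
  then show "Dfun \<eta> \<in> CW k U W" "\<eta> \<in> CW 0 U W" using CW_iff[OF U] e by blast+
qed

lemma wsemi_D:
  fixes \<eta> \<zeta> :: "'a::real_normed_vector \<Rightarrow> 'b::real_normed_vector"
  assumes U: "open U" and e: "\<eta> \<in> CW (Suc k) U W" "\<zeta> \<in> CW (Suc k) U W" and j: "j \<le> k"
  shows "wsemi U f (Suc j) \<eta> \<zeta> = wsemi U f j (Dfun \<eta>) (Dfun \<zeta>)"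
proof -
  have F: "FC (Suc k) U \<eta>" "FC (Suc k) U \<zeta>" using e by (auto simp: CW_def)
  show ?thesis unfolding wsemi_def
  proof (rule SUP_cong[OF refl])
    fix x assume x: "x \<in> U"
    have "mnorm j (\<lambda>h. hderiv j (Dfun \<eta>) x h - hderiv j (Dfun \<zeta>) x h)
       = mnorm (Suc j) (\<lambda>h. hderiv (Suc j) \<eta> x h - hderiv (Suc j) \<zeta> x h)"
      by (rule mnorm_D_diff[OF DI_fwd[OF U F(1) j x] DI_fwd[OF U F(2) j x]
            FC_ml[OF F(1) _ x] FC_ml[OF F(2) _ x]]) (use j in simp_all)
    then show "\<bar>f x\<bar> * ereal (mnorm (Suc j) (\<lambda>h. hderiv (Suc j) \<eta> x h - hderiv (Suc j) \<zeta> x h))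
      = \<bar>f x\<bar> * ereal (mnorm j (\<lambda>h. hderiv j (Dfun \<eta>) x h - hderiv j (Dfun \<zeta>) x h))" by simp
  qed
qed

lemma cont_Dfun:
  assumes U: "open U" "U \<noteq> {}"
  shows "continuous_map (CW_top (Suc k) U W) (CW_top k U W) (Dfun :: ('a::real_normed_vector \<Rightarrow> 'b::real_normed_vector) \<Rightarrow> _)"
  unfolding CW_top_def[of k U W]
proof (rule continuous_on_generated_topo)
  fix V :: "('a \<Rightarrow> ('a \<Rightarrow>\<^sub>L 'b)) set" assume V: "V \<in> insert (CW k U W) {{\<eta> \<in> CW k U W. wsemi U f j \<eta> \<gamma> < ereal \<epsilon>} | \<gamma> f j \<epsilon>.
            \<gamma> \<in> CW k U W \<and> f \<in> W \<and> j \<le> k \<and> \<epsilon> > 0}"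
  show "openin (CW_top (Suc k) U W) (Dfun -` V \<inter> topspace (CW_top (Suc k) U W))"
  proof (cases "V = CW k U W")
    case True
    then have "Dfun -` V \<inter> topspace (CW_top (Suc k) U W) = topspace (CW_top (Suc k) U W)"
      using CW_Suc_facts(1)[OF U(1)] by (auto simp: topspace_CW_top)
    then show ?thesis by simp
  next
    case False
    then obtain \<xi> f j \<epsilon> where V': "V = {\<eta> \<in> CW k U W. wsemi U f j \<eta> \<xi> < ereal \<epsilon>}"
      and \<xi>: "\<xi> \<in> CW k U W" "f \<in> W" "j \<le> k" using V by blast
    have "Dfun -` V \<inter> topspace (CW_top (Suc k) U W)
        = {\<eta>\<in>CW (Suc k) U W. wsemi U f j (Dfun \<eta>) \<xi> < ereal \<epsilon>}"
      using CW_Suc_facts(1)[OF U(1)] by (auto simp: topspace_CW_top V')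
    moreover have "openin (CW_top (Suc k) U W) {\<eta>\<in>CW (Suc k) U W. wsemi U f j (Dfun \<eta>) \<xi> < ereal \<epsilon>}"
      by (rule pre_ball_open[OF U(2) _ \<xi>(1) \<xi>(3) \<xi>(2), where jj="Suc j"])
         (use CW_Suc_facts(1)[OF U(1)] wsemi_D[OF U(1)] \<xi> in auto)
    ultimately show ?thesis by simp
  qed
next
  show "Dfun ` topspace (CW_top (Suc k) U W) \<subseteq> \<Union> (insert (CW k U W :: ('a \<Rightarrow> ('a \<Rightarrow>\<^sub>L 'b)) set) {{\<eta> \<in> CW k U W. wsemi U f j \<eta> \<gamma> < ereal \<epsilon>} | \<gamma> f j \<epsilon>.
            \<gamma> \<in> CW k U W \<and> f \<in> W \<and> j \<le> k \<and> \<epsilon> > 0})"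
    using CW_Suc_facts(1)[OF U(1)] by (auto simp: topspace_CW_top)
qed

lemma cont_id0:
  assumes U: "open U" "U \<noteq> {}"
  shows "continuous_map (CW_top (Suc k) U W) (CW_top 0 U W) (\<lambda>\<eta>::'a::real_normed_vector \<Rightarrow> 'b::real_normed_vector. \<eta>)"
  unfolding CW_top_def[of 0 U W]
proof (rule continuous_on_generated_topo)
  fix V :: "('a \<Rightarrow> 'b) set" assume V: "V \<in> insert (CW 0 U W) {{\<eta> \<in> CW 0 U W. wsemi U f j \<eta> \<gamma> < ereal \<epsilon>} | \<gamma> f j \<epsilon>.
            \<gamma> \<in> CW 0 U W \<and> f \<in> W \<and> j \<le> 0 \<and> \<epsilon> > 0}"
  show "openin (CW_top (Suc k) U W) ((\<lambda>\<eta>. \<eta>) -` V \<inter> topspace (CW_top (Suc k) U W))"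
  proof (cases "V = CW 0 U W")
    case True
    then have "(\<lambda>\<eta>. \<eta>) -` V \<inter> topspace (CW_top (Suc k) U W) = topspace (CW_top (Suc k) U W)"
      using CW_Suc_facts(2)[OF U(1)] by (auto simp: topspace_CW_top)
    then show ?thesis by simp
  next
    case False
    then obtain \<xi> f j \<epsilon> where V': "V = {\<eta> \<in> CW 0 U W. wsemi U f j \<eta> \<xi> < ereal \<epsilon>}"
      and \<xi>: "\<xi> \<in> CW 0 U W" "f \<in> W" "j \<le> 0" using V by blast
    have "(\<lambda>\<eta>. \<eta>) -` V \<inter> topspace (CW_top (Suc k) U W)
        = {\<eta>\<in>CW (Suc k) U W. wsemi U f j ((\<lambda>\<eta>. \<eta>) \<eta>) \<xi> < ereal \<epsilon>}"
      using CW_Suc_facts(2)[OF U(1)] by (auto simp: topspace_CW_top V')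
    moreover have "openin (CW_top (Suc k) U W) {\<eta>\<in>CW (Suc k) U W. wsemi U f j ((\<lambda>\<eta>. \<eta>) \<eta>) \<xi> < ereal \<epsilon>}"
      by (rule pre_ball_open[OF U(2) _ \<xi>(1) \<xi>(3) \<xi>(2), where jj=j and g="\<lambda>\<eta>. \<eta>"])
         (use CW_Suc_facts(2)[OF U(1)] \<xi> in auto)
    ultimately show ?thesis by simp
  qed
next
  show "(\<lambda>\<eta>. \<eta>) ` topspace (CW_top (Suc k) U W) \<subseteq> \<Union> (insert (CW 0 U W :: ('a \<Rightarrow> 'b) set) {{\<eta> \<in> CW 0 U W. wsemi U f j \<eta> \<gamma> < ereal \<epsilon>} | \<gamma> f j \<epsilon>.
            \<gamma> \<in> CW 0 U W \<and> f \<in> W \<and> j \<le> 0 \<and> \<epsilon> > 0})"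
    using CW_Suc_facts(2)[OF U(1)] by (auto simp: topspace_CW_top)
qed

lemma open_image_claim:
  fixes W :: "('a::real_normed_vector \<Rightarrow> ereal) set"
  assumes U: "open U" "U \<noteq> {}"
    and Op: "openin (CW_top (Suc k) U W) Op"
  shows "\<exists>T. openin (prod_topology (CW_top k U W) (CW_top 0 U W)) T \<and>
     (\<lambda>\<eta>::'a \<Rightarrow> 'b::real_normed_vector. (Dfun \<eta>, \<eta>)) ` Op
       = T \<inter> (\<lambda>\<eta>::'a \<Rightarrow> 'b. (Dfun \<eta>, \<eta>)) ` CW (Suc k) U W"
proof -
  define \<phi> where "\<phi> = (\<lambda>\<eta>::'a \<Rightarrow> 'b. (Dfun \<eta>, \<eta>))"
  define C where "C = (CW (Suc k) U W :: ('a \<Rightarrow> 'b) set)"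
  define Y where "Y = prod_topology (CW_top k U W :: ('a \<Rightarrow> ('a \<Rightarrow>\<^sub>L 'b)) topology) (CW_top 0 U W :: ('a \<Rightarrow> 'b) topology)"
  define S where "S = \<phi> ` C"
  have F1: "\<And>\<eta>. \<eta> \<in> C \<Longrightarrow> Dfun \<eta> \<in> CW k U W" and F2: "\<And>\<eta>. \<eta> \<in> C \<Longrightarrow> \<eta> \<in> CW 0 U W"
    using CW_Suc_facts[OF U(1)] unfolding C_def by blast+
  have SY: "S \<subseteq> topspace Y" using F1 F2 by (auto simp: S_def Y_def \<phi>_def topspace_CW_top)
  have inj: "inj_on \<phi> C" by (auto simp: inj_on_def \<phi>_def)
  have OC: "Op \<subseteq> C" using openin_subset[OF Op] by (simp add: topspace_CW_top C_def)
  have "generate_topology_on (insert (CW (Suc k) U W) {{\<eta> \<in> CW (Suc k) U W. wsemi U f j \<eta> \<gamma> < ereal \<epsilon>} | \<gamma> f j \<epsilon>.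
            \<gamma> \<in> CW (Suc k) U W \<and> f \<in> W \<and> j \<le> Suc k \<and> \<epsilon> > 0}) Op"
    using openin_topology_generated_by[OF Op[unfolded CW_top_def]] .
  then have "\<exists>T. openin Y T \<and> \<phi> ` (Op \<inter> C) = T \<inter> S"
  proof (induction rule: generate_topology_on.induct)
    case Empty
    then show ?case by (intro exI[of _ "{}"]) auto
  next
    case (Int a b)
    then obtain Ta Tb where T: "openin Y Ta" "\<phi> ` (a \<inter> C) = Ta \<inter> S" "openin Y Tb" "\<phi> ` (b \<inter> C) = Tb \<inter> S"
      by blast
    have "\<phi> ` (a \<inter> b \<inter> C) = \<phi> ` (a \<inter> C) \<inter> \<phi> ` (b \<inter> C)"
      using inj_on_image_Int[OF inj, of "a \<inter> C" "b \<inter> C"] by (simp add: Int_ac)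
    then have "\<phi> ` (a \<inter> b \<inter> C) = (Ta \<inter> Tb) \<inter> S" using T by auto
    then show ?case using T by (intro exI[of _ "Ta \<inter> Tb"]) auto
  next
    case (UN K)
    then have "\<forall>A\<in>K. \<exists>T. openin Y T \<and> \<phi> ` (A \<inter> C) = T \<inter> S" by blast
    then obtain Tf where Tf: "\<forall>A\<in>K. openin Y (Tf A) \<and> \<phi> ` (A \<inter> C) = Tf A \<inter> S"
      by (rule bchoice[elim_format]) blast
    have "\<phi> ` (\<Union>K \<inter> C) = (\<Union>A\<in>K. \<phi> ` (A \<inter> C))" by blast
    also have "\<dots> = (\<Union>A\<in>K. Tf A \<inter> S)" using Tf by auto
    also have "\<dots> = (\<Union>(Tf ` K)) \<inter> S" by blast
    finally show ?case using Tf by (intro exI[of _ "\<Union>(Tf ` K)"]) auto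
  next
    case (Basis s)
    show ?case
    proof (cases "s = CW (Suc k) U W")
      case True
      then show ?thesis using SY by (intro exI[of _ "topspace Y"]) (auto simp: S_def C_def)
    next
      case False
      then obtain \<gamma> f j \<epsilon> where s: "s = {\<eta> \<in> CW (Suc k) U W. wsemi U f j \<eta> \<gamma> < ereal \<epsilon>}"
        and g: "\<gamma> \<in> CW (Suc k) U W" "f \<in> W" "j \<le> Suc k" "\<epsilon> > 0" using Basis by blast
      show ?thesis
      proof (cases j)
        case 0
        define T :: "(('a \<Rightarrow> ('a \<Rightarrow>\<^sub>L 'b)) \<times> ('a \<Rightarrow> 'b)) set" where "T = CW k U W \<times> {\<zeta> \<in> CW 0 U W. wsemi U f 0 \<zeta> \<gamma> < ereal \<epsilon>}"
        have "openin (CW_top 0 U W) {\<zeta> \<in> CW 0 U W. wsemi U f 0 \<zeta> \<gamma> < ereal \<epsilon>}"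
          unfolding CW_top_def by (rule topology_generated_by_Basis) (use g F2[of \<gamma>] C_def in blast)
        moreover have "openin (CW_top k U W) (CW k U W :: ('a \<Rightarrow> ('a \<Rightarrow>\<^sub>L 'b)) set)"
          using openin_topspace[of "CW_top k U W"] by (simp add: topspace_CW_top)
        ultimately have oT: "openin Y T" unfolding Y_def T_def by (simp add: openin_prod_Times_iff)
        have "\<phi> ` (s \<inter> C) = T \<inter> S"
          using F1 F2 unfolding s T_def S_def \<phi>_def C_def 0 by auto
        then show ?thesis using oT by blast
      next
        case (Suc j')
        define T :: "(('a \<Rightarrow> ('a \<Rightarrow>\<^sub>L 'b)) \<times> ('a \<Rightarrow> 'b)) set" where "T = {\<zeta> \<in> CW k U W. wsemi U f j' \<zeta> (Dfun \<gamma>) < ereal \<epsilon>} \<times> CW 0 U W"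
        have "openin (CW_top k U W) {\<zeta> \<in> CW k U W. wsemi U f j' \<zeta> (Dfun \<gamma>) < ereal \<epsilon>}"
          unfolding CW_top_def by (rule topology_generated_by_Basis) (use g F1[of \<gamma>] C_def Suc in auto)
        moreover have "openin (CW_top 0 U W) (CW 0 U W :: ('a \<Rightarrow> 'b) set)"
          using openin_topspace[of "CW_top 0 U W"] by (simp add: topspace_CW_top)
        ultimately have oT: "openin Y T" unfolding Y_def T_def by (simp add: openin_prod_Times_iff)
        have eq: "\<And>\<eta>. \<eta> \<in> C \<Longrightarrow> wsemi U f j \<eta> \<gamma> = wsemi U f j' (Dfun \<eta>) (Dfun \<gamma>)"
          using wsemi_D[OF U(1) _ g(1)] g(3) Suc unfolding C_def by auto
        have "\<phi> ` (s \<inter> C) = T \<inter> S"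
          using F1 F2 eq g(1) unfolding s T_def S_def \<phi>_def C_def by auto
        then show ?thesis using oT by blast
      qed
    qed
  qed
  then show ?thesis using OC unfolding \<phi>_def Y_def S_def C_def by (simp add: Int_absorb2)
qed

lemma embed:
  assumes U: "open U" "U \<noteq> {}"
  shows "embedding_map (CW_top (Suc k) U W)
          (prod_topology (CW_top k U W) (CW_top 0 U W)) (\<lambda>\<eta>::'a::real_normed_vector \<Rightarrow> 'b::real_normed_vector. (Dfun \<eta>, \<eta>))"
  unfolding embedding_map_def
proof (rule bijective_open_imp_homeomorphic_map)
  let ?X = "CW_top (Suc k) U W :: ('a \<Rightarrow> 'b) topology"
  let ?Y = "prod_topology (CW_top k U W :: ('a \<Rightarrow> ('a \<Rightarrow>\<^sub>L 'b)) topology) (CW_top 0 U W)"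
  let ?\<phi> = "\<lambda>\<eta>::'a \<Rightarrow> 'b. (Dfun \<eta>, \<eta>)"
  have SY: "?\<phi> ` topspace ?X \<subseteq> topspace ?Y"
    using CW_Suc_facts[OF U(1)] by (auto simp: topspace_CW_top)
  show "continuous_map ?X (subtopology ?Y (?\<phi> ` topspace ?X)) ?\<phi>"
    unfolding continuous_map_in_subtopology
    using continuous_map_pairedI[OF cont_Dfun[OF U] cont_id0[OF U]] by auto
  show "open_map ?X (subtopology ?Y (?\<phi> ` topspace ?X)) ?\<phi>"
    unfolding open_map_def openin_subtopology
    unfolding topspace_CW_top by (intro allI impI) (rule open_image_claim[OF U])
  show "?\<phi> ` topspace ?X = topspace (subtopology ?Y (?\<phi> ` topspace ?X))"
    using SY by (simp add: Int_absorb1)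
  show "inj_on ?\<phi> (topspace ?X)" by (auto simp: inj_on_def)
qed

theorem mainTheorem18:
  fixes \<gamma> :: "'a::real_normed_vector \<Rightarrow> 'b::real_normed_vector"
    and U :: "'a set" and W :: "('a \<Rightarrow> ereal) set" and k :: nat
  assumes "open U" and "U \<noteq> {}" and "FC 1 U \<gamma>"
  shows "(\<gamma> \<in> CW (Suc k) U W \<longleftrightarrow> (Dfun \<gamma> \<in> CW k U W \<and> \<gamma> \<in> CW 0 U W))
     \<and> embedding_map (CW_top (Suc k) U W)
          (prod_topology (CW_top k U W) (CW_top 0 U W)) (\<lambda>\<eta>::'a \<Rightarrow> 'b. (Dfun \<eta>, \<eta>))
     \<and> continuous_map (CW_top (Suc k) U W) (CW_top k U W) (Dfun :: ('a \<Rightarrow> 'b) \<Rightarrow> _)"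
  using CW_iff[OF assms(1,3)] embed[OF assms(1,2)] cont_Dfun[OF assms(1,2)] by blast

end
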